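(* Let $q$ be odd, and let $n, k$ be positive integers with $1 \leq k < n$. The number of GI-reducible $[n,k]_q$ codes is \[ L(n,k,q) + \frac{K(n,q)}{q-1} \cdot L^{\chi(-1)}(n-2,\, k-1,\, q), \] where $L(n,k,q)$ is the number of LCD $[n,k]_q$ codes, $K(n,q)$ is the number of vectors $x \in \mathbb{F}_q^n$ with $(x,x)=0$ and $(x,\mathbf{1}) \neq 0$, and $L^\epsilon(n,k,q)$ is the number of $k$-dimensional subspaces of $\mathbb{F}_q^n$ that are LCD with respect to a nondegenerate symmetric bilinear form of type $\epsilon$. The exponent $\chi(-1)$ equals $+1$ when $q \equiv 1 \pmod 4$ and $-1$ when $q \equiv 3 \pmod 4$.
   Context: $(x,y)=\sum_i x_i y_i$ is the standard inner product on $\mathbb{F}_q^n$, $\mathbf{1}$ the all-ones vector, $C^\perp$ the dual of a code $C$ under this inner product, $\mathrm{Hull}(C) = C\cap C^\perp$, and $C$ is LCD if $\mathrm{Hull}(C)=\{0\}$. $\chi$ is the quadratic character of $\mathbb{F}_q$. Over $\mathbb{F}_q$ ($q$ odd), every nondegenerate symmetric bilinear form on $\mathbb{F}_q^n$ is isometric to $\mathrm{diag}(1,\dots,1)$ (type $\epsilon=+1$) or $\mathrm{diag}(1,\dots,1,\gamma)$ with $\gamma$ a non-square (type $\epsilon=-1$); a subspace is LCD with respect to a form with matrix $M$ if $GMG^T$ is nonsingular for a generator matrix $G$. For a nondegenerate symmetric matrix $M$ and an $M$-LCD code $C$ (with generator matrix $G$), $\Pi_{C,M} = MG^T(GMG^T)^{-1}G$.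 With $J$ the all-ones matrix, a code $C$ is GI-reducible if there exists a nondegenerate symmetric $M = aI + bJ$ ($a\neq 0$, $a+nb\neq 0$) such that every code in the permutation class of $C$ is $M$-LCD and, for all $C_1,C_2$ in that class, $C_2 = C_1P$ for some permutation matrix $P$ iff $\Pi_{C_2,M} = P'^T\Pi_{C_1,M}P'$ for some permutation matrix $P'$. (Equivalently, $C$ is GI-reducible iff $C$ is LCD, or $\dim\mathrm{Hull}(C)=1$ with hull vector $x$ satisfying $(x,\mathbf{1})\neq 0$.) *)

theory Defs
  imports "Jordan_Normal_Form.Determinant" "HOL-Combinatorics.Permutations"
begin

text \<open>Vectors of F_q^n are elements of carrier_vec n (type 'a vec); a code is a set of
  such vectors. Codewords are row vectors; the row-vector/matrix product c P is written
  (transpose_mat P) *v c.\<close>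

definition all_ones_vec :: "nat \<Rightarrow> 'a::{zero,one} vec" where
  "all_ones_vec n = vec n (\<lambda>_. 1)"

definition all_ones_mat :: "nat \<Rightarrow> 'a::{zero,one} mat" where
  "all_ones_mat n = mat n n (\<lambda>_. 1)"

text \<open>G is a generator matrix of the length-n code C: its rows are linearly independent
  (the map v |-> v G on F^k is injective, k = number of rows) and C is its row space.\<close>
definition gen_mat :: "nat \<Rightarrow> 'a::field mat \<Rightarrow> 'a vec set \<Rightarrow> bool" where
  "gen_mat n G C \<longleftrightarrow> G \<in> carrier_mat (dim_row G) n
     \<and> inj_on (\<lambda>v. transpose_mat G *\<^sub>v v) (carrier_vec (dim_row G))
     \<and> C = (\<lambda>v. transpose_mat G *\<^sub>v v) ` carrier_vec (dim_row G)"

definition is_code :: "nat \<Rightarrow> nat \<Rightarrow> 'a::field vec set \<Rightarrow> bool" where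
  "is_code n k C \<longleftrightarrow> (\<exists>G. gen_mat n G C \<and> dim_row G = k)"

definition dual_code :: "nat \<Rightarrow> 'a::field vec set \<Rightarrow> 'a vec set" where
  "dual_code n C = {x \<in> carrier_vec n. \<forall>c\<in>C. x \<bullet> c = 0}"

definition code_hull :: "nat \<Rightarrow> 'a::field vec set \<Rightarrow> 'a vec set" where
  "code_hull n C = C \<inter> dual_code n C"

definition LCD :: "nat \<Rightarrow> 'a::field vec set \<Rightarrow> bool" where
  "LCD n C \<longleftrightarrow> code_hull n C = {0\<^sub>v n}"

definition M_LCD :: "nat \<Rightarrow> 'a::field mat \<Rightarrow> 'a vec set \<Rightarrow> bool" where
  "M_LCD n M C \<longleftrightarrow> (\<exists>G. gen_mat n G C \<and> det (G * M * transpose_mat G) \<noteq> 0)"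

definition mat_inv :: "'a::field mat \<Rightarrow> 'a mat" where
  "mat_inv A = (SOME B. B \<in> carrier_mat (dim_row A) (dim_row A)
                   \<and> A * B = 1\<^sub>m (dim_row A) \<and> B * A = 1\<^sub>m (dim_row A))"

definition proj_mat :: "nat \<Rightarrow> 'a::field mat \<Rightarrow> 'a vec set \<Rightarrow> 'a mat" where
  "proj_mat n M C = (let G = (SOME G. gen_mat n G C) in
      M * transpose_mat G * mat_inv (G * M * transpose_mat G) * G)"

definition perm_mat :: "nat \<Rightarrow> (nat \<Rightarrow> nat) \<Rightarrow> 'a::{zero,one} mat" where
  "perm_mat n \<sigma> = mat n n (\<lambda>(i,j). if \<sigma> i = j then 1 else 0)"

definition is_perm_mat :: "nat \<Rightarrow> 'a::{zero,one} mat \<Rightarrow> bool" where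
  "is_perm_mat n P \<longleftrightarrow> (\<exists>\<sigma>. \<sigma> permutes {..<n} \<and> P = perm_mat n \<sigma>)"

definition code_mult :: "'a::field vec set \<Rightarrow> 'a mat \<Rightarrow> 'a vec set" where
  "code_mult C P = (\<lambda>c. transpose_mat P *\<^sub>v c) ` C"

definition perm_class :: "nat \<Rightarrow> 'a::field vec set \<Rightarrow> 'a vec set set" where
  "perm_class n C = {code_mult C P | P. is_perm_mat n P}"

definition GI_reducible :: "nat \<Rightarrow> 'a::field vec set \<Rightarrow> bool" where
  "GI_reducible n C \<longleftrightarrow> (\<exists>a b. a \<noteq> 0 \<and> a + of_nat n * b \<noteq> 0 \<and>
     (let M = a \<cdot>\<^sub>m 1\<^sub>m n + b \<cdot>\<^sub>m all_ones_mat n in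
        (\<forall>C'\<in>perm_class n C. M_LCD n M C') \<and>
        (\<forall>C1\<in>perm_class n C. \<forall>C2\<in>perm_class n C.
           (\<exists>P. is_perm_mat n P \<and> C2 = code_mult C1 P) \<longleftrightarrow>
           (\<exists>P'. is_perm_mat n P' \<and>
                 proj_mat n M C2 = transpose_mat P' * proj_mat n M C1 * P'))))"

definition quad_char :: "'a::field \<Rightarrow> int" where
  "quad_char a = (if a = 0 then 0 else if (\<exists>y. y * y = a) then 1 else -1)"

text \<open>Representative Gram matrix of a nondegenerate symmetric form of type eps on F^n:
  the identity (eps = 1), or diag(1,...,1,gamma) with gamma a fixed non-square (eps = -1).\<close>
definition form_of_type :: "int \<Rightarrow> nat \<Rightarrow> 'a::field mat" where
  "form_of_type eps n = (if eps = 1 then 1\<^sub>m n else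
     (let \<gamma> = (SOME g::'a. g \<noteq> 0 \<and> \<not> (\<exists>y. y * y = g)) in
       mat n n (\<lambda>(i,j). if i = j then (if i = n - 1 then \<gamma> else 1) else 0)))"

end

theory Submission
  imports Defs
begin

lemma of_nat_card_field_zero:
  "of_nat (card (UNIV :: 'a::{finite,field} set)) = (0::'a)"
proof -
  have "(\<Sum>x\<in>(UNIV::'a set). x) = (\<Sum>x\<in>(UNIV::'a set). x + 1)"
    by (rule sum.reindex_bij_witness[of _ "\<lambda>x. x + 1" "\<lambda>x. x - 1"]) auto
  also have "\<dots> = (\<Sum>x\<in>(UNIV::'a set). x) + of_nat (card (UNIV :: 'a set))"
    by (simp add: sum.distrib)
  finally show ?thesis by simp
qed

lemma two_ne_zero_odd:
  assumes "odd (card (UNIV :: 'a::{finite,field} set))"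
  shows "(2::'a) \<noteq> 0"
proof
  assume h: "(2::'a) = 0"
  obtain m where m: "card (UNIV :: 'a set) = 2*m+1" using assms oddE by blast
  have "(of_nat (card (UNIV :: 'a set))::'a) = 2 * of_nat m + 1" unfolding m by simp
  also have "\<dots> = 1" using h by simp
  finally show False using of_nat_card_field_zero[where 'a='a] by simp
qed

lemma card_field_ge3:
  assumes "odd (card (UNIV :: 'a::{finite,field} set))"
  shows "card (UNIV :: 'a set) \<ge> 3"
proof -
  have "{0::'a, 1} \<subseteq> UNIV" by simp
  hence "card {0::'a,1} \<le> card (UNIV::'a set)" by (intro card_mono) auto
  hence "2 \<le> card (UNIV::'a set)" by simp
  with assms show ?thesis by presburger
qed


definition issq :: "'a::field \<Rightarrow> bool" where "issq x \<longleftrightarrow> (\<exists>y. y * y = x)"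

lemma nonsq_mult_nonsq:
  fixes g h :: "'a::{finite,field}"
  assumes g: "\<not> issq g" and h: "\<not> issq h"
  shows "issq (g * h)"
proof -
  define Q where "Q = {x::'a. x \<noteq> 0 \<and> issq x}"
  define N where "N = {x::'a. x \<noteq> 0 \<and> \<not> issq x}"
  have g0: "g \<noteq> 0" using g unfolding issq_def by (metis mult_zero_left)
  have h0: "h \<noteq> 0" using h unfolding issq_def by (metis mult_zero_left)
  have U: "UNIV - {0::'a} = (\<Union>s\<in>Q. {y. y * y = s})"
    unfolding Q_def issq_def by auto
  have fib: "card {y::'a. y * y = s} \<le> 2" if "s \<in> Q" for s
  proof -
    from that have "issq s" by (simp add: Q_def)
    then obtain y0 where y0: "y0 * y0 = s" unfolding issq_def by auto
    have "{y::'a. y * y = s} \<subseteq> {y0, -y0}"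
    proof
      fix y assume "y \<in> {y::'a. y * y = s}"
      hence "(y - y0) * (y + y0) = 0" using y0 by (simp add: algebra_simps)
      thus "y \<in> {y0, -y0}" by (auto simp: add_eq_0_iff)
    qed
    hence "card {y::'a. y * y = s} \<le> card {y0, -y0}" by (intro card_mono) auto
    also have "\<dots> \<le> 2" by (simp add: card_insert_le_m1)
    finally show ?thesis .
  qed
  have "card (UNIV - {0::'a}) \<le> (\<Sum>s\<in>Q. card {y::'a. y * y = s})"
    unfolding U by (rule card_UN_le) simp
  also have "\<dots> \<le> (\<Sum>s\<in>Q. 2)" by (rule sum_mono) (use fib in auto)
  finally have c1: "card (UNIV - {0::'a}) \<le> 2 * card Q" by simp
  have "UNIV - {0::'a} = Q \<union> N" "Q \<inter> N = {}" unfolding Q_def N_def by auto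
  hence c2: "card (UNIV - {0::'a}) = card Q + card N" by (simp add: card_Un_disjoint)
  have sub: "(\<lambda>x. g * x) ` Q \<subseteq> N"
  proof
    fix z assume "z \<in> (\<lambda>x. g * x) ` Q"
    then obtain x where x: "x \<in> Q" "z = g * x" by auto
    then obtain y where y: "y * y = x" "x \<noteq> 0" unfolding Q_def issq_def by auto
    have "y \<noteq> 0" using y by auto
    have "\<not> issq z"
    proof
      assume "issq z" then obtain w where "w * w = g * x" using x unfolding issq_def by auto
      hence "(w / y) * (w / y) = g" using y \<open>y \<noteq> 0\<close> by (simp add: field_simps)
      thus False using g unfolding issq_def by blast
    qed
    thus "z \<in> N" unfolding N_def using x g0 y(2) by auto
  qed
  have inj: "inj_on (\<lambda>x. g * x) Q" using g0 by (auto simp: inj_on_def)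
  have "card Q \<le> card N" using card_inj_on_le[OF inj sub] by simp
  hence "card Q = card N" using c1 c2 by linarith
  hence eq: "(\<lambda>x. g * x) ` Q = N"
    using sub by (intro card_subset_eq) (auto simp: card_image[OF inj])
  have "h \<in> N" unfolding N_def using h h0 by auto
  then obtain x where x: "x \<in> Q" "h = g * x" using eq by auto
  then obtain y where "y * y = x" unfolding Q_def issq_def by auto
  hence "(g * y) * (g * y) = g * h" using x by (simp add: algebra_simps)
  thus ?thesis unfolding issq_def by blast
qed

lemma exists_nonsq:
  assumes "odd (card (UNIV :: 'a::{finite,field} set))"
  shows "\<exists>g::'a. g \<noteq> 0 \<and> \<not> (\<exists>y. y * y = g)"
proof -
  have "\<not> inj (\<lambda>y::'a. y * y)"
  proof
    assume "inj (\<lambda>y::'a. y * y)"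
    hence "(1::'a) = -1" by (rule injD) simp
    hence "(2::'a) = 0" by (metis one_add_one add_eq_0_iff)
    thus False using two_ne_zero_odd[OF assms] by simp
  qed
  hence "\<not> surj (\<lambda>y::'a. y * y)" by (metis finite_UNIV_surj_inj finite_class.finite_UNIV)
  then obtain g where "\<forall>y::'a. y * y \<noteq> g" by (metis surj_def)
  moreover have "g \<noteq> 0" using calculation by (metis mult_zero_left)
  ultimately show ?thesis by blast
qed


definition lc :: "nat \<Rightarrow> nat \<Rightarrow> (nat \<Rightarrow> 'a::field vec) \<Rightarrow> 'a vec \<Rightarrow> 'a vec" where
  "lc n k g y = vec n (\<lambda>j. \<Sum>i\<in>{0..<k}. y $ i * g i $ j)"

lemma lc_carrier[simp]: "lc n k g y \<in> carrier_vec n" unfolding lc_def by simp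
lemma lc_dim[simp]: "dim_vec (lc n k g y) = n" unfolding lc_def by simp
lemma lc_index[simp]: "j < n \<Longrightarrow> lc n k g y $ j = (\<Sum>i\<in>{0..<k}. y $ i * g i $ j)"
  unfolding lc_def by simp

lemma lc_cong: "(\<And>i. i < k \<Longrightarrow> g i = g' i) \<Longrightarrow> lc n k g = lc n k g'"
  unfolding lc_def by (intro ext eq_vecI) auto

lemma lc_add: "y1 \<in> carrier_vec k \<Longrightarrow> y2 \<in> carrier_vec k \<Longrightarrow>
  lc n k g (y1 + y2) = lc n k g y1 + lc n k g y2"
  by (intro eq_vecI) (auto simp: sum.distrib algebra_simps)

lemma lc_smult: "y \<in> carrier_vec k \<Longrightarrow> lc n k g (t \<cdot>\<^sub>v y) = t \<cdot>\<^sub>v lc n k g y"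
  by (intro eq_vecI) (auto simp: sum_distrib_left algebra_simps)

lemma lc_zero: "lc n k g (0\<^sub>v k) = 0\<^sub>v n"
  by (intro eq_vecI) auto

lemma lc_unit: "i < k \<Longrightarrow> g i \<in> carrier_vec n \<Longrightarrow> lc n k g (unit_vec k i) = g i"
proof (intro eq_vecI)
  fix j assume i: "i < k" and g: "g i \<in> carrier_vec n" and j: "j < dim_vec (g i)"
  have "lc n k g (unit_vec k i) $ j = (\<Sum>l\<in>{0..<k}. unit_vec k i $ l * g l $ j)"
    using j g by auto
  also have "\<dots> = (\<Sum>l\<in>{0..<k}. (if l = i then g i $ j else 0))"
    by (rule sum.cong) (auto simp: unit_vec_def)
  also have "\<dots> = g i $ j" using i by simp
  finally show "lc n k g (unit_vec k i) $ j = g i $ j" .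
qed auto

lemma mat_lc: assumes T: "T \<in> carrier_mat n' n" and g: "\<And>i. i < k \<Longrightarrow> g i \<in> carrier_vec n"
  shows "T *\<^sub>v lc n k g y = lc n' k (\<lambda>i. T *\<^sub>v g i) y"
proof (intro eq_vecI)
  have gd: "\<And>i. i < k \<Longrightarrow> dim_vec (g i) = n" using g by auto
  fix l assume "l < dim_vec (lc n' k (\<lambda>i. T *\<^sub>v g i) y)"
  hence l: "l < n'" by simp
  have "(T *\<^sub>v lc n k g y) $ l = (\<Sum>j\<in>{0..<n}. T $$ (l, j) * (\<Sum>i\<in>{0..<k}. y $ i * g i $ j))"
    using T l by (auto simp: scalar_prod_def intro!: sum.cong)
  also have "\<dots> = (\<Sum>i\<in>{0..<k}. y $ i * (\<Sum>j\<in>{0..<n}. T $$ (l, j) * g i $ j))"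
    by (simp add: sum_distrib_left sum_distrib_right sum.swap[of _ "{0..<n}"] algebra_simps)
  also have "\<dots> = lc n' k (\<lambda>i. T *\<^sub>v g i) y $ l"
    using T l gd by (auto simp: scalar_prod_def intro!: sum.cong)
  finally show "(T *\<^sub>v lc n k g y) $ l = lc n' k (\<lambda>i. T *\<^sub>v g i) y $ l" .
qed (use T in auto)

lemma gen_lc: assumes G: "G \<in> carrier_mat k n" and y: "y \<in> carrier_vec k"
  shows "transpose_mat G *\<^sub>v y = lc n k (row G) y"
  using G y by (intro eq_vecI) (auto simp: scalar_prod_def intro!: sum.cong)

definition is_lcode :: "nat \<Rightarrow> nat \<Rightarrow> (nat \<Rightarrow> 'a::field vec) \<Rightarrow> 'a vec set \<Rightarrow> bool" where
  "is_lcode n k g C \<longleftrightarrow> (\<forall>i<k. g i \<in> carrier_vec n) \<and> inj_on (lc n k g) (carrier_vec k)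
     \<and> C = lc n k g ` carrier_vec k"

lemma is_code_iff: "is_code n k C \<longleftrightarrow> (\<exists>g. is_lcode n k g C)"
proof
  assume "is_code n k C"
  then obtain G where G: "gen_mat n G C" "dim_row G = k" unfolding is_code_def by auto
  have Gc: "G \<in> carrier_mat k n" using G unfolding gen_mat_def by auto
  have eq: "\<And>y. y \<in> carrier_vec k \<Longrightarrow> transpose_mat G *\<^sub>v y = lc n k (row G) y"
    using gen_lc[OF Gc] by auto
  have "inj_on (lc n k (row G)) (carrier_vec k)"
    using G unfolding gen_mat_def inj_on_def using eq by metis
  moreover have "C = lc n k (row G) ` carrier_vec k"
    using G eq unfolding gen_mat_def by (auto simp: image_def)
  moreover have "\<forall>i<k. row G i \<in> carrier_vec n" using Gc by auto
  ultimately show "\<exists>g. is_lcode n k g C" unfolding is_lcode_def by blast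
next
  assume "\<exists>g. is_lcode n k g C"
  then obtain g where g: "is_lcode n k g C" by auto
  define G where "G = mat k n (\<lambda>(i,j). g i $ j)"
  have Gc: "G \<in> carrier_mat k n" unfolding G_def by simp
  have rowG: "lc n k (row G) = lc n k g"
    using g unfolding is_lcode_def
    by (intro lc_cong eq_vecI) (auto simp: G_def)
  have eq: "\<And>y. y \<in> carrier_vec k \<Longrightarrow> transpose_mat G *\<^sub>v y = lc n k g y"
    using gen_lc[OF Gc] rowG by auto
  have "gen_mat n G C" unfolding gen_mat_def
    using Gc g eq unfolding is_lcode_def inj_on_def
    by (auto simp: image_def)
  thus "is_code n k C" unfolding is_code_def using Gc by auto
qed

definition subsp :: "nat \<Rightarrow> 'a::field vec set \<Rightarrow> bool" where
  "subsp n C \<longleftrightarrow> C \<subseteq> carrier_vec n \<and> 0\<^sub>v n \<in> C \<and> (\<forall>u\<in>C. \<forall>w\<in>C. u + w \<in> C)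
     \<and> (\<forall>t. \<forall>u\<in>C. t \<cdot>\<^sub>v u \<in> C)"

lemma lcode_subsp: assumes "is_lcode n k g C" shows "subsp n C"
proof -
  have C: "C = lc n k g ` carrier_vec k" using assms unfolding is_lcode_def by auto
  show ?thesis unfolding subsp_def C
  proof (intro conjI ballI allI)
    show "0\<^sub>v n \<in> lc n k g ` carrier_vec k" using lc_zero[of n k g]
      by (metis image_eqI zero_carrier_vec)
    fix u w assume "u \<in> lc n k g ` carrier_vec k" "w \<in> lc n k g ` carrier_vec k"
    then obtain y1 y2 where "y1 \<in> carrier_vec k" "y2 \<in> carrier_vec k" "u = lc n k g y1" "w = lc n k g y2" by auto
    thus "u + w \<in> lc n k g ` carrier_vec k" using lc_add
      by (metis add_carrier_vec image_eqI)
  next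
    fix t u assume "u \<in> lc n k g ` carrier_vec k"
    then obtain y where "y \<in> carrier_vec k" "u = lc n k g y" by auto
    thus "t \<cdot>\<^sub>v u \<in> lc n k g ` carrier_vec k" using lc_smult
      by (metis smult_carrier_vec image_eqI)
  qed auto
qed

lemma code_subsp: "is_code n k C \<Longrightarrow> subsp n C"
  using is_code_iff lcode_subsp by blast

lemma subsp_diff: assumes "subsp n C" "u \<in> C" "w \<in> C" shows "u - w \<in> C"
proof -
  have "u - w = u + (-1) \<cdot>\<^sub>v w" using assms unfolding subsp_def
    by (intro eq_vecI) auto
  thus ?thesis using assms unfolding subsp_def by auto
qed

lemma subsp_lin: assumes "subsp n C" "u \<in> C" "w \<in> C" shows "a \<cdot>\<^sub>v u + b \<cdot>\<^sub>v w \<in> C"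
  using assms unfolding subsp_def by auto

lemma finite_carrier_vec: "finite (carrier_vec n :: 'a::finite vec set)"
proof -
  have "carrier_vec n \<subseteq> vec_of_list ` {xs :: 'a list. set xs \<subseteq> UNIV \<and> length xs = n}"
  proof
    fix v :: "'a vec" assume "v \<in> carrier_vec n"
    thus "v \<in> vec_of_list ` {xs. set xs \<subseteq> UNIV \<and> length xs = n}"
      by (intro image_eqI[of _ _ "list_of_vec v"]) (auto simp: vec_list)
  qed
  moreover have "finite {xs :: 'a list. set xs \<subseteq> UNIV \<and> length xs = n}"
    by (rule finite_lists_length_eq) simp
  ultimately show ?thesis by (meson finite_surj)
qed


definition lcd_wrt :: "nat \<Rightarrow> 'a::field mat \<Rightarrow> 'a vec set \<Rightarrow> bool" where
  "lcd_wrt n B C \<longleftrightarrow> (\<forall>c'\<in>C. (\<forall>c\<in>C. c \<bullet> (B *\<^sub>v c') = 0) \<longrightarrow> c' = 0\<^sub>v n)"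

lemma gram_identity:
  fixes G :: "'a::field mat"
  assumes G: "G \<in> carrier_mat k n" and B: "B \<in> carrier_mat n n"
    and z: "z \<in> carrier_vec k" and y: "y \<in> carrier_vec k"
  shows "z \<bullet> ((G * B * transpose_mat G) *\<^sub>v y) = (transpose_mat G *\<^sub>v z) \<bullet> (B *\<^sub>v (transpose_mat G *\<^sub>v y))"
proof -
  have "(G * B * transpose_mat G) *\<^sub>v y = G *\<^sub>v (B *\<^sub>v (transpose_mat G *\<^sub>v y))"
    using G B y by (simp add: assoc_mult_mat_vec[of _ k n _ k])
  moreover have "(transpose_mat G *\<^sub>v z) \<bullet> (B *\<^sub>v (transpose_mat G *\<^sub>v y)) = z \<bullet> (G *\<^sub>v (B *\<^sub>v (transpose_mat G *\<^sub>v y)))"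
    by (rule transpose_vec_mult_scalar[of G k n]) (use G B y z in auto)
  ultimately show ?thesis by simp
qed

lemma det_gram_iff:
  assumes gen: "gen_mat n G C" and B: "B \<in> carrier_mat n n"
  shows "det (G * B * transpose_mat G) \<noteq> 0 \<longleftrightarrow> lcd_wrt n B C"
proof -
  define k where "k = dim_row G"
  have G: "G \<in> carrier_mat k n" using gen unfolding gen_mat_def k_def by auto
  have inj: "inj_on (\<lambda>v. transpose_mat G *\<^sub>v v) (carrier_vec k)"
    and C: "C = (\<lambda>v. transpose_mat G *\<^sub>v v) ` carrier_vec k"
    using gen unfolding gen_mat_def k_def by auto
  define A where "A = G * B * transpose_mat G"
  have A: "A \<in> carrier_mat k k" unfolding A_def using G B by auto
  have GT0: "transpose_mat G *\<^sub>v 0\<^sub>v k = 0\<^sub>v n" using G by auto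
  show ?thesis
  proof
    assume d: "det (G * B * transpose_mat G) \<noteq> 0"
    show "lcd_wrt n B C" unfolding lcd_wrt_def
    proof (intro ballI impI)
      fix c' assume "c' \<in> C" and orth: "\<forall>c\<in>C. c \<bullet> (B *\<^sub>v c') = 0"
      then obtain y where y: "y \<in> carrier_vec k" "c' = transpose_mat G *\<^sub>v y" using C by auto
      have "A *\<^sub>v y = 0\<^sub>v k"
      proof (intro eq_vecI)
        fix i assume "i < dim_vec (0\<^sub>v k :: 'a vec)"
        hence i: "i < k" by simp
        have "(A *\<^sub>v y) $ i = unit_vec k i \<bullet> (A *\<^sub>v y)"
          using A i by (subst scalar_prod_left_unit[of _ k]) (auto simp: y)
        also have "\<dots> = (transpose_mat G *\<^sub>v unit_vec k i) \<bullet> (B *\<^sub>v c')"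
          unfolding A_def y(2) by (rule gram_identity[OF G B _ y(1)]) simp
        also have "\<dots> = 0" using orth C by auto
        finally show "(A *\<^sub>v y) $ i = 0\<^sub>v k $ i" using i by simp
      qed (use A in auto)
      hence "y = 0\<^sub>v k" using det_0_iff_vec_prod_zero_field[OF A] d y(1) unfolding A_def by auto
      thus "c' = 0\<^sub>v n" using y GT0 by simp
    qed
  next
    assume l: "lcd_wrt n B C"
    show "det (G * B * transpose_mat G) \<noteq> 0"
    proof
      assume "det (G * B * transpose_mat G) = 0"
      then obtain v where v: "v \<in> carrier_vec k" "v \<noteq> 0\<^sub>v k" "A *\<^sub>v v = 0\<^sub>v k"
        using det_0_iff_vec_prod_zero_field[OF A] unfolding A_def by auto
      have "\<forall>c\<in>C. c \<bullet> (B *\<^sub>v (transpose_mat G *\<^sub>v v)) = 0"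
      proof
        fix c assume "c \<in> C"
        then obtain z where z: "z \<in> carrier_vec k" "c = transpose_mat G *\<^sub>v z" using C by auto
        have "c \<bullet> (B *\<^sub>v (transpose_mat G *\<^sub>v v)) = z \<bullet> (A *\<^sub>v v)"
          unfolding z(2) A_def by (rule gram_identity[OF G B z(1) v(1), symmetric])
        thus "c \<bullet> (B *\<^sub>v (transpose_mat G *\<^sub>v v)) = 0" using v z by simp
      qed
      moreover have "transpose_mat G *\<^sub>v v \<in> C" using C v by auto
      ultimately have "transpose_mat G *\<^sub>v v = transpose_mat G *\<^sub>v 0\<^sub>v k"
        using l GT0 unfolding lcd_wrt_def by auto
      hence "v = 0\<^sub>v k" using inj v(1) unfolding inj_on_def by auto
      thus False using v by simp
    qed
  qed
qed

lemma M_LCD_iff: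
  assumes "is_code n k C" and B: "B \<in> carrier_mat n n"
  shows "M_LCD n B C \<longleftrightarrow> lcd_wrt n B C"
proof -
  obtain G where "gen_mat n G C" using assms unfolding is_code_def by auto
  thus ?thesis unfolding M_LCD_def using det_gram_iff[OF _ B] by blast
qed

definition hullx :: "nat \<Rightarrow> 'a::field vec set \<Rightarrow> 'a vec set" where
  "hullx n C = {c\<in>C. \<forall>c'\<in>C. c \<bullet> c' = 0}"

lemma code_hull_eq: assumes "subsp n C" shows "code_hull n C = hullx n C"
  using assms unfolding code_hull_def dual_code_def hullx_def subsp_def by auto

lemma LCD_iff:
  assumes S: "subsp n C"
  shows "LCD n C \<longleftrightarrow> lcd_wrt n (1\<^sub>m n) C"
proof -
  have Cc: "C \<subseteq> carrier_vec n" and z: "0\<^sub>v n \<in> C" using S unfolding subsp_def by auto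
  have h0: "0\<^sub>v n \<in> hullx n C" using z Cc unfolding hullx_def by auto
  have "lcd_wrt n (1\<^sub>m n) C \<longleftrightarrow> (\<forall>c'\<in>C. (\<forall>c\<in>C. c' \<bullet> c = 0) \<longrightarrow> c' = 0\<^sub>v n)"
    unfolding lcd_wrt_def using Cc by (auto simp: comm_scalar_prod[of _ n] subset_iff)
  also have "\<dots> \<longleftrightarrow> hullx n C = {0\<^sub>v n}" using h0 unfolding hullx_def by auto
  finally show ?thesis unfolding LCD_def code_hull_eq[OF S] by simp
qed


abbreviation pinv :: "(nat \<Rightarrow> nat) \<Rightarrow> nat \<Rightarrow> nat" where "pinv f \<equiv> Hilbert_Choice.inv f"

lemma perm_mat_carrier[simp]: "perm_mat n \<sigma> \<in> carrier_mat n n"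
  unfolding perm_mat_def by simp

lemma perm_lt: "\<sigma> permutes {..<n} \<Longrightarrow> i < n \<Longrightarrow> \<sigma> i < n"
  using permutes_in_image[of \<sigma> "{..<n}" i] by auto

lemma pinv_lt: "\<sigma> permutes {..<n} \<Longrightarrow> i < n \<Longrightarrow> pinv \<sigma> i < n"
  using perm_lt[OF permutes_inv] by blast

lemma permT_vec:
  fixes v :: "'a::field vec"
  assumes s: "\<sigma> permutes {..<n}" and v: "v \<in> carrier_vec n"
  shows "transpose_mat (perm_mat n \<sigma>) *\<^sub>v v = vec n (\<lambda>i. v $ pinv \<sigma> i)"
proof (intro eq_vecI)
  fix i assume "i < dim_vec (vec n (\<lambda>i. v $ pinv \<sigma> i))"
  hence i: "i < n" by simp
  have iv: "pinv \<sigma> i < n" using pinv_lt[OF s i] .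
  have "(transpose_mat (perm_mat n \<sigma>) *\<^sub>v v) $ i = (\<Sum>j\<in>{0..<n}. (if \<sigma> j = i then 1 else 0) * v $ j)"
    using i v by (auto simp: perm_mat_def scalar_prod_def intro!: sum.cong)
  also have "\<dots> = (\<Sum>j\<in>{0..<n}. (if j = pinv \<sigma> i then v $ j else 0))"
    by (rule sum.cong) (auto simp: permutes_inverses[OF s])
  also have "\<dots> = v $ pinv \<sigma> i" using iv by simp
  finally show "(transpose_mat (perm_mat n \<sigma>) *\<^sub>v v) $ i = vec n (\<lambda>i. v $ pinv \<sigma> i) $ i" using i by simp
qed (simp add: perm_mat_def)

lemma perm_vec:
  fixes v :: "'a::field vec"
  assumes s: "\<sigma> permutes {..<n}" and v: "v \<in> carrier_vec n"
  shows "perm_mat n \<sigma> *\<^sub>v v = vec n (\<lambda>i. v $ \<sigma> i)"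
proof (intro eq_vecI)
  fix i assume "i < dim_vec (vec n (\<lambda>i. v $ \<sigma> i))"
  hence i: "i < n" by simp
  have iv: "\<sigma> i < n" using perm_lt[OF s i] .
  have "(perm_mat n \<sigma> *\<^sub>v v) $ i = (\<Sum>j\<in>{0..<n}. (if \<sigma> i = j then 1 else 0) * v $ j)"
    using i v by (auto simp: perm_mat_def scalar_prod_def intro!: sum.cong)
  also have "\<dots> = (\<Sum>j\<in>{0..<n}. (if j = \<sigma> i then v $ j else 0))"
    by (rule sum.cong) auto
  also have "\<dots> = v $ \<sigma> i" using iv by simp
  finally show "(perm_mat n \<sigma> *\<^sub>v v) $ i = vec n (\<lambda>i. v $ \<sigma> i) $ i" using i by simp
qed (simp add: perm_mat_def)

lemma perm_sum_inv:
  assumes s: "\<sigma> permutes {..<n}"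
  shows "(\<Sum>i\<in>{0..<n}. f (pinv \<sigma> i)) = (\<Sum>i\<in>{0..<n}. f i)"
proof -
  have "pinv \<sigma> permutes {0..<n}" using permutes_inv[OF s] by (simp add: atLeast0LessThan)
  thus ?thesis by (rule sum.permute[symmetric, where g = f, unfolded comp_def])
qed

definition pT :: "nat \<Rightarrow> (nat \<Rightarrow> nat) \<Rightarrow> 'a::field vec \<Rightarrow> 'a vec" where
  "pT n \<sigma> v = transpose_mat (perm_mat n \<sigma>) *\<^sub>v v"

lemma pT_carrier[simp]: "v \<in> carrier_vec n \<Longrightarrow> pT n \<sigma> v \<in> carrier_vec n"
  unfolding pT_def by (rule mult_mat_vec_carrier[of _ n n]) simp_all

lemma pT_eq: "\<sigma> permutes {..<n} \<Longrightarrow> v \<in> carrier_vec n \<Longrightarrow> pT n \<sigma> v = vec n (\<lambda>i. v $ pinv \<sigma> i)"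
  unfolding pT_def by (rule permT_vec)

lemma pT_dot:
  assumes s: "\<sigma> permutes {..<n}" and u: "u \<in> carrier_vec n" and v: "v \<in> carrier_vec n"
  shows "pT n \<sigma> u \<bullet> pT n \<sigma> v = u \<bullet> v"
proof -
  have "pT n \<sigma> u \<bullet> pT n \<sigma> v = (\<Sum>i\<in>{0..<n}. u $ pinv \<sigma> i * v $ pinv \<sigma> i)"
    unfolding pT_eq[OF s u] pT_eq[OF s v] scalar_prod_def by simp
  also have "\<dots> = u \<bullet> v" unfolding scalar_prod_def using v
    by (simp add: perm_sum_inv[OF s, of "\<lambda>i. u $ i * v $ i"])
  finally show ?thesis .
qed

lemma ones_carrier[simp]: "all_ones_vec n \<in> carrier_vec n" unfolding all_ones_vec_def by simp

lemma dot_ones: "(v::'a::field vec) \<in> carrier_vec n \<Longrightarrow> v \<bullet> all_ones_vec n = (\<Sum>i\<in>{0..<n}. v $ i)"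
  unfolding all_ones_vec_def scalar_prod_def by (intro sum.cong) auto

lemma pT_ones:
  assumes s: "\<sigma> permutes {..<n}" and u: "u \<in> carrier_vec n"
  shows "pT n \<sigma> u \<bullet> all_ones_vec n = u \<bullet> all_ones_vec n"
  using perm_sum_inv[OF s, of "\<lambda>i. u $ i"] u
  by (simp add: dot_ones pT_eq[OF s u])

lemma pT_inv1:
  assumes s: "\<sigma> permutes {..<n}" and v: "v \<in> carrier_vec n"
  shows "perm_mat n \<sigma> *\<^sub>v pT n \<sigma> v = v"
  unfolding pT_eq[OF s v] using v
  by (subst perm_vec[OF s]) (auto simp: permutes_inverses[OF s] perm_lt[OF s])

lemma pT_inv2:
  assumes s: "\<sigma> permutes {..<n}" and v: "v \<in> carrier_vec n"
  shows "pT n \<sigma> (perm_mat n \<sigma> *\<^sub>v v) = v"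
  unfolding perm_vec[OF s v] using v
  by (subst pT_eq[OF s]) (auto simp: permutes_inverses[OF s] pinv_lt[OF s])

definition Mab :: "nat \<Rightarrow> 'a::field \<Rightarrow> 'a \<Rightarrow> 'a mat" where
  "Mab n a b = a \<cdot>\<^sub>m 1\<^sub>m n + b \<cdot>\<^sub>m all_ones_mat n"

lemma Mab_carrier[simp]: "Mab n a b \<in> carrier_mat n n"
  unfolding Mab_def all_ones_mat_def by simp

lemma Mab_vec:
  assumes v: "v \<in> carrier_vec n"
  shows "Mab n a b *\<^sub>v v = a \<cdot>\<^sub>v v + (b * (v \<bullet> all_ones_vec n)) \<cdot>\<^sub>v all_ones_vec n"
proof (intro eq_vecI)
  fix i assume "i < dim_vec (a \<cdot>\<^sub>v v + (b * (v \<bullet> all_ones_vec n)) \<cdot>\<^sub>v all_ones_vec n)"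
  hence i: "i < n" using v by (simp add: all_ones_vec_def)
  have "(Mab n a b *\<^sub>v v) $ i = (\<Sum>j\<in>{0..<n}. (a * (if i = j then 1 else 0) + b) * v $ j)"
    using i v by (auto simp: Mab_def all_ones_mat_def scalar_prod_def intro!: sum.cong)
  also have "\<dots> = (\<Sum>j\<in>{0..<n}. (if j = i then a * v $ j else 0) + b * v $ j)"
    by (rule sum.cong) (auto simp: algebra_simps)
  also have "\<dots> = a * v $ i + b * (\<Sum>j\<in>{0..<n}. v $ j)" using i by (simp add: sum.distrib sum_distrib_left)
  finally show "(Mab n a b *\<^sub>v v) $ i = (a \<cdot>\<^sub>v v + (b * (v \<bullet> all_ones_vec n)) \<cdot>\<^sub>v all_ones_vec n) $ i"
    unfolding dot_ones[OF v] using i v by (simp add: all_ones_vec_def)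
qed (use v in \<open>auto simp: Mab_def all_ones_mat_def all_ones_vec_def\<close>)

lemma Mab_form:
  assumes u: "u \<in> carrier_vec n" and v: "v \<in> carrier_vec n"
  shows "u \<bullet> (Mab n a b *\<^sub>v v) = a * (u \<bullet> v) + b * (u \<bullet> all_ones_vec n) * (v \<bullet> all_ones_vec n)"
proof -
  have "u \<bullet> (a \<cdot>\<^sub>v v + (b * (v \<bullet> all_ones_vec n)) \<cdot>\<^sub>v all_ones_vec n)
     = u \<bullet> (a \<cdot>\<^sub>v v) + u \<bullet> ((b * (v \<bullet> all_ones_vec n)) \<cdot>\<^sub>v all_ones_vec n)"
    by (rule scalar_prod_add_distrib[of _ n]) (use u v in auto)
  thus ?thesis unfolding Mab_vec[OF v] using u v by (simp add: algebra_simps)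
qed

lemma Mab_sym:
  assumes u: "u \<in> carrier_vec n" and v: "v \<in> carrier_vec n"
  shows "u \<bullet> (Mab n a b *\<^sub>v v) = v \<bullet> (Mab n a b *\<^sub>v u)"
  unfolding Mab_form[OF u v] Mab_form[OF v u] using comm_scalar_prod[OF u v] by simp

lemma pT_lin:
  assumes "u \<in> carrier_vec n" "w \<in> carrier_vec n"
  shows "pT n \<sigma> (x \<cdot>\<^sub>v u + y \<cdot>\<^sub>v w) = x \<cdot>\<^sub>v pT n \<sigma> u + y \<cdot>\<^sub>v pT n \<sigma> w"
proof -
  have P: "transpose_mat (perm_mat n \<sigma>) \<in> carrier_mat n n" by simp
  show ?thesis unfolding pT_def using assms
    by (simp add: mult_add_distrib_mat_vec[OF P] mult_mat_vec[OF P])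
qed

lemma Mab_pT:
  assumes s: "\<sigma> permutes {..<n}" and v: "v \<in> carrier_vec n"
  shows "Mab n a b *\<^sub>v pT n \<sigma> v = pT n \<sigma> (Mab n a b *\<^sub>v v)"
proof -
  have o: "pT n \<sigma> (all_ones_vec n) = all_ones_vec n"
    unfolding pT_eq[OF s ones_carrier]
    by (intro eq_vecI) (auto simp: all_ones_vec_def pinv_lt[OF s])
  show ?thesis unfolding Mab_vec[OF pT_carrier[OF v]] Mab_vec[OF v] pT_lin[OF v ones_carrier] o
    pT_ones[OF s v] by simp
qed


lemma mat_eq_vec:
  fixes A B :: "'a::field mat"
  assumes A: "A \<in> carrier_mat n m" and B: "B \<in> carrier_mat n m"
    and h: "\<And>v. v \<in> carrier_vec m \<Longrightarrow> A *\<^sub>v v = B *\<^sub>v v"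
  shows "A = B"
proof (rule eq_matI)
  fix i j assume i: "i < dim_row B" and j: "j < dim_col B"
  have "A $$ (i,j) = (A *\<^sub>v unit_vec m j) $ i" using A B i j by auto
  also have "\<dots> = (B *\<^sub>v unit_vec m j) $ i" using h[of "unit_vec m j"] by simp
  also have "\<dots> = B $$ (i,j)" using B i j by auto
  finally show "A $$ (i,j) = B $$ (i,j)" .
qed (use A B in auto)

lemma lcode_image:
  assumes g: "is_lcode n k g C" and T: "T \<in> carrier_mat n n"
    and inj: "inj_on (\<lambda>v. T *\<^sub>v v) (carrier_vec n)"
  shows "is_lcode n k (\<lambda>i. T *\<^sub>v g i) ((\<lambda>c. T *\<^sub>v c) ` C)"
proof -
  have gi: "\<And>i. i < k \<Longrightarrow> g i \<in> carrier_vec n" and injg: "inj_on (lc n k g) (carrier_vec k)"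
    and C: "C = lc n k g ` carrier_vec k" using g unfolding is_lcode_def by auto
  have eq: "lc n k (\<lambda>i. T *\<^sub>v g i) y = T *\<^sub>v lc n k g y" for y
    using mat_lc[OF T gi] by simp
  show ?thesis unfolding is_lcode_def
  proof (intro conjI allI impI)
    show "inj_on (lc n k (\<lambda>i. T *\<^sub>v g i)) (carrier_vec k)"
      unfolding inj_on_def eq using inj injg unfolding inj_on_def by (metis lc_carrier)
    show "(\<lambda>c. T *\<^sub>v c) ` C = lc n k (\<lambda>i. T *\<^sub>v g i) ` carrier_vec k"
      unfolding C eq by (simp add: image_image)
  qed (use gi T in auto)
qed

lemma code_mult_eq: "code_mult C (perm_mat n \<sigma>) = pT n \<sigma> ` C"
  unfolding code_mult_def pT_def by simp

lemma pT_inj: "\<sigma> permutes {..<n} \<Longrightarrow> inj_on (pT n \<sigma>) (carrier_vec n)"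
  unfolding inj_on_def by (metis pT_inv1)

lemma code_mult_code:
  assumes "is_code n k C" and s: "\<sigma> permutes {..<n}"
  shows "is_code n k (code_mult C (perm_mat n \<sigma>))"
proof -
  obtain g where g: "is_lcode n k g C" using assms is_code_iff by blast
  have "is_lcode n k (\<lambda>i. transpose_mat (perm_mat n \<sigma>) *\<^sub>v g i)
          ((\<lambda>c. transpose_mat (perm_mat n \<sigma>) *\<^sub>v c) ` C)"
  proof (rule lcode_image[OF g])
    show "inj_on (\<lambda>v. transpose_mat (perm_mat n \<sigma> :: 'a mat) *\<^sub>v v) (carrier_vec n)"
    proof (rule inj_onI)
      fix x y :: "'a vec" assume x: "x \<in> carrier_vec n" and y: "y \<in> carrier_vec n"
        and e: "transpose_mat (perm_mat n \<sigma>) *\<^sub>v x = transpose_mat (perm_mat n \<sigma>) *\<^sub>v y"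
      have "x = perm_mat n \<sigma> *\<^sub>v pT n \<sigma> x" using pT_inv1[OF s x] by simp
      also have "\<dots> = perm_mat n \<sigma> *\<^sub>v pT n \<sigma> y" unfolding pT_def e ..
      also have "\<dots> = y" using pT_inv1[OF s y] by simp
      finally show "x = y" .
    qed
  qed (rule transpose_carrier_mat[THEN iffD2, OF perm_mat_carrier])
  thus ?thesis unfolding is_code_iff code_mult_def by blast
qed

lemma pT_Mab_form:
  assumes s: "\<sigma> permutes {..<n}" and u: "u \<in> carrier_vec n" and w: "w \<in> carrier_vec n"
  shows "pT n \<sigma> u \<bullet> (Mab n a b *\<^sub>v pT n \<sigma> w) = u \<bullet> (Mab n a b *\<^sub>v w)"
  using Mab_form[OF pT_carrier[OF u] pT_carrier[OF w]] Mab_form[OF u w]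
  by (simp add: pT_dot[OF s u w] pT_ones[OF s u] pT_ones[OF s w])

lemma pT_zero: "\<sigma> permutes {..<n} \<Longrightarrow> pT n \<sigma> (0\<^sub>v n) = (0\<^sub>v n :: 'a::field vec)"
  by (subst pT_eq) (auto intro!: eq_vecI simp: pinv_lt)

lemma lcd_perm:
  assumes s: "\<sigma> permutes {..<n}" and Cc: "C \<subseteq> carrier_vec n" and l: "lcd_wrt n (Mab n a b) C"
  shows "lcd_wrt n (Mab n a b) (pT n \<sigma> ` C)"
  unfolding lcd_wrt_def
proof (intro ballI impI)
  fix c' assume "c' \<in> pT n \<sigma> ` C" and h: "\<forall>c\<in>pT n \<sigma> ` C. c \<bullet> (Mab n a b *\<^sub>v c') = 0"
  then obtain w where w: "w \<in> C" "c' = pT n \<sigma> w" by auto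
  have "\<forall>c\<in>C. c \<bullet> (Mab n a b *\<^sub>v w) = 0"
    using h w Cc pT_Mab_form[OF s] by (metis image_eqI subsetD)
  hence "w = 0\<^sub>v n" using l w unfolding lcd_wrt_def by auto
  thus "c' = 0\<^sub>v n" using w pT_zero[OF s] by simp
qed

lemma proj_props:
  fixes M :: "'a::field mat"
  assumes code: "is_code n k C" and M: "M \<in> carrier_mat n n" and lcd: "lcd_wrt n M C"
  shows "proj_mat n M C \<in> carrier_mat n n"
    "\<And>v. v \<in> carrier_vec n \<Longrightarrow> transpose_mat (proj_mat n M C) *\<^sub>v v \<in> C"
    "\<And>c. c \<in> C \<Longrightarrow> transpose_mat (proj_mat n M C) *\<^sub>v c = c"
    "\<And>c. c \<in> C \<Longrightarrow> proj_mat n M C *\<^sub>v (M *\<^sub>v c) = M *\<^sub>v c"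
proof -
  define G where "G = (SOME G. gen_mat n G C)"
  have "\<exists>G. gen_mat n G C" using code unfolding is_code_def by auto
  hence gen: "gen_mat n G C" unfolding G_def by (rule someI_ex)
  define k' where "k' = dim_row G"
  have G: "G \<in> carrier_mat k' n" using gen unfolding gen_mat_def k'_def by auto
  have C: "C = (\<lambda>v. transpose_mat G *\<^sub>v v) ` carrier_vec k'"
    using gen unfolding gen_mat_def k'_def by auto
  define A where "A = G * M * transpose_mat G"
  have A: "A \<in> carrier_mat k' k'" unfolding A_def using G M by auto
  have dA: "det A \<noteq> 0" unfolding A_def using det_gram_iff[OF gen M] lcd by simp
  let ?R = "ring_mat TYPE('a) k' ()"
  have "A \<in> Units ?R" by (rule det_non_zero_imp_unit[OF A dA])
  then obtain B where B: "B \<in> carrier_mat k' k'" "A * B = 1\<^sub>m k'" "B * A = 1\<^sub>m k'"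
    unfolding Units_def ring_mat_def by auto
  have "\<exists>B. B \<in> carrier_mat (dim_row A) (dim_row A) \<and> A * B = 1\<^sub>m (dim_row A) \<and> B * A = 1\<^sub>m (dim_row A)"
    using A B by auto
  hence Ai: "mat_inv A \<in> carrier_mat k' k'" "A * mat_inv A = 1\<^sub>m k'" "mat_inv A * A = 1\<^sub>m k'"
    unfolding mat_inv_def using A by (metis (mono_tags, lifting) carrier_matD(1) someI_ex)+
  define X where "X = M * transpose_mat G * mat_inv A"
  have X: "X \<in> carrier_mat n k'" unfolding X_def using M G Ai by auto
  have Pi: "proj_mat n M C = X * G" unfolding proj_mat_def Let_def G_def[symmetric] X_def A_def by simp
  show "proj_mat n M C \<in> carrier_mat n n" unfolding Pi using X G by auto
  have PiT: "transpose_mat (proj_mat n M C) = transpose_mat G * transpose_mat X"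
    unfolding Pi by (rule transpose_mult[OF X G])
  have PiTv: "transpose_mat (proj_mat n M C) *\<^sub>v v = transpose_mat G *\<^sub>v (transpose_mat X *\<^sub>v v)"
    if "v \<in> carrier_vec n" for v
    unfolding PiT using that X G by (simp add: assoc_mult_mat_vec[of _ n k' _ k'])
  show "\<And>v. v \<in> carrier_vec n \<Longrightarrow> transpose_mat (proj_mat n M C) *\<^sub>v v \<in> C"
  proof -
    fix v :: "'a vec" assume v: "v \<in> carrier_vec n"
    have "transpose_mat X *\<^sub>v v \<in> carrier_vec k'" using X v by auto
    thus "transpose_mat (proj_mat n M C) *\<^sub>v v \<in> C" unfolding PiTv[OF v] by (subst C) (rule imageI)
  qed
  have GX: "G * X = 1\<^sub>m k'"
  proof -
    have "G * X = G * (M * transpose_mat G * mat_inv A)" unfolding X_def ..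
    also have "\<dots> = G * M * transpose_mat G * mat_inv A" using G M Ai
      by (simp add: assoc_mult_mat[of _ k' n _ n _ k'] assoc_mult_mat[of _ n n _ k' _ k'] assoc_mult_mat[of _ k' n _ k' _ k'])
    also have "\<dots> = 1\<^sub>m k'" using Ai unfolding A_def by simp
    finally show ?thesis .
  qed
  show "\<And>c. c \<in> C \<Longrightarrow> transpose_mat (proj_mat n M C) *\<^sub>v c = c"
  proof -
    fix c assume "c \<in> C"
    then obtain y where y: "y \<in> carrier_vec k'" "c = transpose_mat G *\<^sub>v y" using C by auto
    have "transpose_mat X *\<^sub>v (transpose_mat G *\<^sub>v y) = (transpose_mat X * transpose_mat G) *\<^sub>v y"
      using X G y by (simp add: assoc_mult_mat_vec[of _ k' n _ k'])
    also have "transpose_mat X * transpose_mat G = transpose_mat (G * X)"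
      by (rule transpose_mult[OF G X, symmetric])
    also have "\<dots> = 1\<^sub>m k'" using GX by simp
    finally have "transpose_mat X *\<^sub>v c = y" using y by simp
    thus "transpose_mat (proj_mat n M C) *\<^sub>v c = c" using PiTv[of c] y G by simp
  qed
  show "\<And>c. c \<in> C \<Longrightarrow> proj_mat n M C *\<^sub>v (M *\<^sub>v c) = M *\<^sub>v c"
  proof -
    fix c assume "c \<in> C"
    then obtain y where y: "y \<in> carrier_vec k'" "c = transpose_mat G *\<^sub>v y" using C by auto
    have c: "c \<in> carrier_vec n" using y G by auto
    have e1: "G *\<^sub>v (M *\<^sub>v c) = A *\<^sub>v y" unfolding A_def y(2) using G M y
      by (simp add: assoc_mult_mat_vec[of _ k' n _ n] assoc_mult_mat_vec[of _ n n _ k'] assoc_mult_mat_vec[of _ k' n _ k']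
          assoc_mult_mat[of _ k' n _ n _ k'])
    have "proj_mat n M C *\<^sub>v (M *\<^sub>v c) = X *\<^sub>v (G *\<^sub>v (M *\<^sub>v c))"
      unfolding Pi using X G M c by (simp add: assoc_mult_mat_vec[of _ n k' _ n])
    also have "\<dots> = X *\<^sub>v (A *\<^sub>v y)" unfolding e1 ..
    also have "\<dots> = (M * transpose_mat G) *\<^sub>v (mat_inv A *\<^sub>v (A *\<^sub>v y))"
      unfolding X_def by (rule assoc_mult_mat_vec[of _ n k' _ k']) (use M G Ai A y in auto)
    also have "mat_inv A *\<^sub>v (A *\<^sub>v y) = (mat_inv A * A) *\<^sub>v y"
      by (rule assoc_mult_mat_vec[symmetric, of _ k' k' _ k']) (use Ai A y in auto)
    also have "\<dots> = y" using Ai y by simp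
    also have "(M * transpose_mat G) *\<^sub>v y = M *\<^sub>v c" unfolding y(2)
      by (rule assoc_mult_mat_vec[of _ n n _ k']) (use M G y in auto)
    finally show "proj_mat n M C *\<^sub>v (M *\<^sub>v c) = M *\<^sub>v c" .
  qed
qed


lemma Mab_mult_carrier[simp]: "v \<in> carrier_vec n \<Longrightarrow> Mab n a b *\<^sub>v v \<in> carrier_vec n"
  by (rule mult_mat_vec_carrier[OF Mab_carrier])

lemma perm_mult_carrier[simp]: "v \<in> carrier_vec n \<Longrightarrow> perm_mat n \<sigma> *\<^sub>v v \<in> carrier_vec n"
  by (rule mult_mat_vec_carrier[OF perm_mat_carrier])

lemma vec_minus_zero:
  fixes a b :: "'a::field vec"
  assumes "a \<in> carrier_vec n" "b \<in> carrier_vec n" "a - b = 0\<^sub>v n" shows "a = b"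
proof (rule eq_vecI)
  fix i assume i: "i < dim_vec b"
  have "(a - b) $ i = a $ i - b $ i" using assms(1,2) i by simp
  moreover have "(a - b) $ i = 0" using assms i by simp
  ultimately show "a $ i = b $ i" by simp
qed (use assms in auto)

lemma proj_unique:
  fixes M P1 P2 :: "'a::field mat"
  assumes S: "subsp n C" and l: "lcd_wrt n M C" and M: "M \<in> carrier_mat n n"
    and sym: "\<And>u w. u \<in> carrier_vec n \<Longrightarrow> w \<in> carrier_vec n \<Longrightarrow> u \<bullet> (M *\<^sub>v w) = w \<bullet> (M *\<^sub>v u)"
    and P1: "P1 \<in> carrier_mat n n" and P2: "P2 \<in> carrier_mat n n"
    and i1: "\<And>v. v \<in> carrier_vec n \<Longrightarrow> transpose_mat P1 *\<^sub>v v \<in> C"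
    and i2: "\<And>v. v \<in> carrier_vec n \<Longrightarrow> transpose_mat P2 *\<^sub>v v \<in> C"
    and m1: "\<And>c. c \<in> C \<Longrightarrow> P1 *\<^sub>v (M *\<^sub>v c) = M *\<^sub>v c"
    and m2: "\<And>c. c \<in> C \<Longrightarrow> P2 *\<^sub>v (M *\<^sub>v c) = M *\<^sub>v c"
  shows "P1 = P2"
proof -
  have Cc: "C \<subseteq> carrier_vec n" using S unfolding subsp_def by auto
  have "transpose_mat P1 = transpose_mat P2"
  proof (rule mat_eq_vec[of _ n n])
    fix v :: "'a vec" assume v: "v \<in> carrier_vec n"
    define d where "d = transpose_mat P1 *\<^sub>v v - transpose_mat P2 *\<^sub>v v"
    have a1: "transpose_mat P1 *\<^sub>v v \<in> carrier_vec n" using P1 v by auto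
    have a2: "transpose_mat P2 *\<^sub>v v \<in> carrier_vec n" using P2 v by auto
    have dC: "d \<in> C" unfolding d_def using subsp_diff[OF S i1[OF v] i2[OF v]] .
    have dc: "d \<in> carrier_vec n" using dC Cc by auto
    have "\<forall>c\<in>C. c \<bullet> (M *\<^sub>v d) = 0"
    proof
      fix c assume c: "c \<in> C"
      have cc: "c \<in> carrier_vec n" using c Cc by auto
      have Mc: "M *\<^sub>v c \<in> carrier_vec n" using M cc by auto
      have "c \<bullet> (M *\<^sub>v d) = d \<bullet> (M *\<^sub>v c)" using sym[OF cc dc] .
      also have "\<dots> = (transpose_mat P1 *\<^sub>v v) \<bullet> (M *\<^sub>v c) - (transpose_mat P2 *\<^sub>v v) \<bullet> (M *\<^sub>v c)"
        unfolding d_def by (rule minus_scalar_prod_distrib[OF a1 a2 Mc])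
      also have "(transpose_mat P1 *\<^sub>v v) \<bullet> (M *\<^sub>v c) = v \<bullet> (P1 *\<^sub>v (M *\<^sub>v c))"
        by (rule transpose_vec_mult_scalar[OF P1 Mc v])
      also have "(transpose_mat P2 *\<^sub>v v) \<bullet> (M *\<^sub>v c) = v \<bullet> (P2 *\<^sub>v (M *\<^sub>v c))"
        by (rule transpose_vec_mult_scalar[OF P2 Mc v])
      finally show "c \<bullet> (M *\<^sub>v d) = 0" using m1[OF c] m2[OF c] by simp
    qed
    hence "d = 0\<^sub>v n" using l dC unfolding lcd_wrt_def by auto
    thus "transpose_mat P1 *\<^sub>v v = transpose_mat P2 *\<^sub>v v"
      using vec_minus_zero[OF a1 a2] unfolding d_def by simp
  qed (use P1 P2 in auto)
  thus ?thesis by (metis transpose_transpose)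
qed

lemma tr3:
  fixes A P :: "'a::field mat"
  assumes A: "A \<in> carrier_mat n n" and P: "P \<in> carrier_mat n n" and v: "v \<in> carrier_vec n"
  shows "transpose_mat (transpose_mat P * A * P) *\<^sub>v v = transpose_mat P *\<^sub>v (transpose_mat A *\<^sub>v (P *\<^sub>v v))"
proof -
  have "transpose_mat (transpose_mat P * A * P) = transpose_mat P * transpose_mat (transpose_mat P * A)"
    by (rule transpose_mult[of _ n n]) (use A P in auto)
  also have "transpose_mat (transpose_mat P * A) = transpose_mat A * P"
    by (subst transpose_mult[of _ n n]) (use A P in auto)
  finally have e: "transpose_mat (transpose_mat P * A * P) = transpose_mat P * (transpose_mat A * P)" .
  show ?thesis unfolding e using A P v
    by (simp add: assoc_mult_mat_vec[of _ n n _ n])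
qed

lemma mult3_vec:
  fixes A P :: "'a::field mat"
  assumes A: "A \<in> carrier_mat n n" and P: "P \<in> carrier_mat n n" and v: "v \<in> carrier_vec n"
  shows "(transpose_mat P * A * P) *\<^sub>v v = transpose_mat P *\<^sub>v (A *\<^sub>v (P *\<^sub>v v))"
  using A P v by (simp add: assoc_mult_mat_vec[of _ n n _ n])

lemma proj_perm:
  assumes code: "is_code n k C" and l: "lcd_wrt n (Mab n a b) C" and s: "\<sigma> permutes {..<n}"
  shows "proj_mat n (Mab n a b) (pT n \<sigma> ` C)
       = transpose_mat (perm_mat n \<sigma>) * proj_mat n (Mab n a b) C * perm_mat n \<sigma>"
proof -
  let ?M = "Mab n a b" and ?P = "perm_mat n \<sigma> :: 'a mat"
  let ?C2 = "pT n \<sigma> ` C"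
  have S: "subsp n C" using code_subsp[OF code] .
  have Cc: "C \<subseteq> carrier_vec n" using S unfolding subsp_def by auto
  have code2: "is_code n k ?C2" using code_mult_code[OF code s] unfolding code_mult_eq .
  have l2: "lcd_wrt n ?M ?C2" by (rule lcd_perm[OF s Cc l])
  note p1 = proj_props[OF code Mab_carrier l]
  note p2 = proj_props[OF code2 Mab_carrier l2]
  let ?Pi = "proj_mat n ?M C"
  have Pi: "?Pi \<in> carrier_mat n n" by (rule p1(1))
  show ?thesis
  proof (rule proj_unique[OF code_subsp[OF code2] l2 Mab_carrier])
    show "\<And>u w. u \<in> carrier_vec n \<Longrightarrow> w \<in> carrier_vec n \<Longrightarrow> u \<bullet> (?M *\<^sub>v w) = w \<bullet> (?M *\<^sub>v u)"
      by (rule Mab_sym)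
    show "proj_mat n ?M ?C2 \<in> carrier_mat n n" by (rule p2(1))
    show "transpose_mat ?P * ?Pi * ?P \<in> carrier_mat n n" using Pi
      by (meson mult_carrier_mat perm_mat_carrier transpose_carrier_mat)
    show "\<And>v. v \<in> carrier_vec n \<Longrightarrow> transpose_mat (proj_mat n ?M ?C2) *\<^sub>v v \<in> ?C2" by (rule p2(2))
    show "\<And>c. c \<in> ?C2 \<Longrightarrow> proj_mat n ?M ?C2 *\<^sub>v (?M *\<^sub>v c) = ?M *\<^sub>v c" by (rule p2(4))
    show "transpose_mat (transpose_mat ?P * ?Pi * ?P) *\<^sub>v v \<in> ?C2" if v: "v \<in> carrier_vec n" for v
    proof -
      have "transpose_mat (transpose_mat ?P * ?Pi * ?P) *\<^sub>v v = pT n \<sigma> (transpose_mat ?Pi *\<^sub>v (?P *\<^sub>v v))"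
        unfolding pT_def by (rule tr3[OF Pi perm_mat_carrier v])
      moreover have "transpose_mat ?Pi *\<^sub>v (?P *\<^sub>v v) \<in> C" by (rule p1(2)) (use v in simp)
      ultimately show ?thesis by auto
    qed
    show "(transpose_mat ?P * ?Pi * ?P) *\<^sub>v (?M *\<^sub>v c) = ?M *\<^sub>v c" if c: "c \<in> ?C2" for c
    proof -
      obtain c1 where c1: "c1 \<in> C" "c = pT n \<sigma> c1" using c by auto
      have c1c: "c1 \<in> carrier_vec n" using c1 Cc by auto
      have Mc1: "?M *\<^sub>v c1 \<in> carrier_vec n" using c1c by auto
      have e1: "(transpose_mat ?P * ?Pi * ?P) *\<^sub>v (?M *\<^sub>v c) = pT n \<sigma> (?Pi *\<^sub>v (?P *\<^sub>v (?M *\<^sub>v c)))"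
        unfolding pT_def by (rule mult3_vec[OF Pi perm_mat_carrier]) (use c1c c1 in auto)
      have e2: "?M *\<^sub>v c = pT n \<sigma> (?M *\<^sub>v c1)" unfolding c1(2) by (rule Mab_pT[OF s c1c])
      have e3: "?P *\<^sub>v pT n \<sigma> (?M *\<^sub>v c1) = ?M *\<^sub>v c1" by (rule pT_inv1[OF s Mc1])
      have e4: "?Pi *\<^sub>v (?M *\<^sub>v c1) = ?M *\<^sub>v c1" by (rule p1(4)[OF c1(1)])
      show ?thesis unfolding e1 unfolding e2 e3 e4 ..
    qed
  qed
qed

lemma proj_range:
  assumes code: "is_code n k C" and M: "M \<in> carrier_mat n n" and l: "lcd_wrt n M C"
  shows "(\<lambda>v. transpose_mat (proj_mat n M C) *\<^sub>v v) ` carrier_vec n = C"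
proof -
  have Cc: "C \<subseteq> carrier_vec n" using code_subsp[OF code] unfolding subsp_def by auto
  note p = proj_props[OF code M l]
  show ?thesis
  proof
    show "(\<lambda>v. transpose_mat (proj_mat n M C) *\<^sub>v v) ` carrier_vec n \<subseteq> C" using p(2) by auto
    show "C \<subseteq> (\<lambda>v. transpose_mat (proj_mat n M C) *\<^sub>v v) ` carrier_vec n"
    proof
      fix c assume c: "c \<in> C"
      hence "c = transpose_mat (proj_mat n M C) *\<^sub>v c" using p(3) by simp
      thus "c \<in> (\<lambda>v. transpose_mat (proj_mat n M C) *\<^sub>v v) ` carrier_vec n" using c Cc by auto
    qed
  qed
qed


lemma pT_id: "v \<in> carrier_vec n \<Longrightarrow> pT n id v = (v :: 'a::field vec)"
  by (subst pT_eq) (auto simp: inv_id intro!: eq_vecI)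

lemma perm_class_iff:
  "C' \<in> perm_class n C \<longleftrightarrow> (\<exists>\<sigma>. \<sigma> permutes {..<n} \<and> C' = pT n \<sigma> ` C)"
  unfolding perm_class_def is_perm_mat_def using code_mult_eq by blast

lemma perm_image_carrier:
  assumes s: "\<sigma> permutes {..<n}"
  shows "(\<lambda>v. perm_mat n \<sigma> *\<^sub>v v) ` carrier_vec n = (carrier_vec n :: 'a::field vec set)"
proof
  show "(\<lambda>v. perm_mat n \<sigma> *\<^sub>v v) ` carrier_vec n \<subseteq> (carrier_vec n :: 'a vec set)" by auto
  show "(carrier_vec n :: 'a vec set) \<subseteq> (\<lambda>v. perm_mat n \<sigma> *\<^sub>v v) ` carrier_vec n"
  proof
    fix w :: "'a vec" assume w: "w \<in> carrier_vec n"
    hence "w = perm_mat n \<sigma> *\<^sub>v pT n \<sigma> w" using pT_inv1[OF s w] by simp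
    thus "w \<in> (\<lambda>v. perm_mat n \<sigma> *\<^sub>v v) ` carrier_vec n" using w by auto
  qed
qed

lemma GI_iff:
  assumes code: "is_code n k C"
  shows "GI_reducible n C \<longleftrightarrow> (\<exists>a b. a \<noteq> 0 \<and> a + of_nat n * b \<noteq> 0 \<and> lcd_wrt n (Mab n a b) C)"
proof -
  have Cc: "C \<subseteq> carrier_vec n" using code_subsp[OF code] unfolding subsp_def by auto
  have Cin: "C \<in> perm_class n C"
  proof -
    have "pT n id ` C = C" using Cc pT_id by (force simp: image_def)
    thus ?thesis unfolding perm_class_iff by (metis permutes_id)
  qed
  have pc_code: "is_code n k C'" if "C' \<in> perm_class n C" for C'
    using that code_mult_code[OF code] unfolding perm_class_iff code_mult_eq by auto
  have pc_lcd: "lcd_wrt n (Mab n a b) C'" if "C' \<in> perm_class n C" "lcd_wrt n (Mab n a b) C" for C' a b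
    using that lcd_perm[OF _ Cc] unfolding perm_class_iff by auto
  show ?thesis
  proof
    assume "GI_reducible n C"
    then obtain a b where ab: "a \<noteq> 0" "a + of_nat n * b \<noteq> 0"
      and all: "\<forall>C'\<in>perm_class n C. M_LCD n (Mab n a b) C'"
      unfolding GI_reducible_def Let_def Mab_def[symmetric] by blast
    have "lcd_wrt n (Mab n a b) C" using all Cin M_LCD_iff[OF code Mab_carrier] by blast
    thus "\<exists>a b. a \<noteq> 0 \<and> a + of_nat n * b \<noteq> 0 \<and> lcd_wrt n (Mab n a b) C" using ab by blast
  next
    assume "\<exists>a b. a \<noteq> 0 \<and> a + of_nat n * b \<noteq> 0 \<and> lcd_wrt n (Mab n a b) C"
    then obtain a b where ab: "a \<noteq> 0" "a + of_nat n * b \<noteq> 0" and l: "lcd_wrt n (Mab n a b) C" by blast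
    let ?M = "Mab n a b"
    have A: "\<forall>C'\<in>perm_class n C. M_LCD n ?M C'"
      using pc_code pc_lcd[OF _ l] M_LCD_iff[OF _ Mab_carrier] by blast
    have B: "(\<exists>P. is_perm_mat n P \<and> C2 = code_mult C1 P) \<longleftrightarrow>
           (\<exists>P'. is_perm_mat n P' \<and> proj_mat n ?M C2 = transpose_mat P' * proj_mat n ?M C1 * P')"
      if C1: "C1 \<in> perm_class n C" and C2: "C2 \<in> perm_class n C" for C1 C2
    proof -
      have code1: "is_code n k C1" and code2: "is_code n k C2" using pc_code C1 C2 by auto
      have l1: "lcd_wrt n ?M C1" and l2: "lcd_wrt n ?M C2" using pc_lcd[OF _ l] C1 C2 by auto
      show ?thesis
      proof
        assume "\<exists>P. is_perm_mat n P \<and> C2 = code_mult C1 P"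
        then obtain \<tau> where t: "\<tau> permutes {..<n}" "C2 = pT n \<tau> ` C1"
          unfolding is_perm_mat_def code_mult_eq by (metis code_mult_eq)
        have "proj_mat n ?M C2 = transpose_mat (perm_mat n \<tau>) * proj_mat n ?M C1 * perm_mat n \<tau>"
          unfolding t(2) by (rule proj_perm[OF code1 l1 t(1)])
        thus "\<exists>P'. is_perm_mat n P' \<and> proj_mat n ?M C2 = transpose_mat P' * proj_mat n ?M C1 * P'"
          using t(1) unfolding is_perm_mat_def by blast
      next
        assume "\<exists>P'. is_perm_mat n P' \<and> proj_mat n ?M C2 = transpose_mat P' * proj_mat n ?M C1 * P'"
        then obtain \<tau> where t: "\<tau> permutes {..<n}"
          and e: "proj_mat n ?M C2 = transpose_mat (perm_mat n \<tau>) * proj_mat n ?M C1 * perm_mat n \<tau>"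
          unfolding is_perm_mat_def by blast
        let ?Pi = "proj_mat n ?M C1" and ?P = "perm_mat n \<tau> :: 'a mat"
        have Pi: "?Pi \<in> carrier_mat n n" by (rule proj_props(1)[OF code1 Mab_carrier l1])
        have "C2 = (\<lambda>v. transpose_mat (proj_mat n ?M C2) *\<^sub>v v) ` carrier_vec n"
          by (rule proj_range[OF code2 Mab_carrier l2, symmetric])
        also have "\<dots> = (\<lambda>v. pT n \<tau> (transpose_mat ?Pi *\<^sub>v (?P *\<^sub>v v))) ` carrier_vec n"
          unfolding e pT_def by (intro image_cong refl tr3[OF Pi perm_mat_carrier])
        also have "\<dots> = pT n \<tau> ` ((\<lambda>w. transpose_mat ?Pi *\<^sub>v w) ` ((\<lambda>v. ?P *\<^sub>v v) ` carrier_vec n))"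
          by (simp add: image_image)
        also have "\<dots> = pT n \<tau> ` C1" unfolding perm_image_carrier[OF t]
          proj_range[OF code1 Mab_carrier l1] ..
        finally have "C2 = code_mult C1 ?P" unfolding code_mult_eq .
        thus "\<exists>P. is_perm_mat n P \<and> C2 = code_mult C1 P" using t unfolding is_perm_mat_def by blast
      qed
    qed
    show "GI_reducible n C" unfolding GI_reducible_def Let_def Mab_def[symmetric]
      using ab A B by blast
  qed
qed


definition line :: "'a::field vec \<Rightarrow> 'a vec set" where
  "line x = (\<lambda>t. t \<cdot>\<^sub>v x) ` UNIV"

definition Xset :: "nat \<Rightarrow> 'a::field vec set" where
  "Xset n = {x \<in> carrier_vec n. x \<bullet> x = 0 \<and> x \<bullet> all_ones_vec n \<noteq> 0}"

lemma hullx_sub: "hullx n C \<subseteq> C" unfolding hullx_def by auto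

lemma hullx_lin:
  assumes S: "subsp n C" and y: "y \<in> hullx n C" and z: "z \<in> hullx n C"
  shows "\<alpha> \<cdot>\<^sub>v y + \<beta> \<cdot>\<^sub>v z \<in> hullx n C"
proof -
  have Cc: "C \<subseteq> carrier_vec n" using S unfolding subsp_def by auto
  have yc: "y \<in> carrier_vec n" and zc: "z \<in> carrier_vec n" using y z Cc unfolding hullx_def by auto
  have "(\<alpha> \<cdot>\<^sub>v y + \<beta> \<cdot>\<^sub>v z) \<bullet> c' = 0" if c': "c' \<in> C" for c'
  proof -
    have cc: "c' \<in> carrier_vec n" using c' Cc by auto
    have "(\<alpha> \<cdot>\<^sub>v y + \<beta> \<cdot>\<^sub>v z) \<bullet> c' = (\<alpha> \<cdot>\<^sub>v y) \<bullet> c' + (\<beta> \<cdot>\<^sub>v z) \<bullet> c'"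
      by (rule add_scalar_prod_distrib[of _ n]) (use yc zc cc in auto)
    also have "\<dots> = \<alpha> * (y \<bullet> c') + \<beta> * (z \<bullet> c')" using yc zc cc by simp
    finally show ?thesis using y z c' unfolding hullx_def by auto
  qed
  moreover have "\<alpha> \<cdot>\<^sub>v y + \<beta> \<cdot>\<^sub>v z \<in> C" using subsp_lin[OF S] y z unfolding hullx_def by auto
  ultimately show ?thesis unfolding hullx_def by auto
qed

lemma hullx_smult:
  assumes S: "subsp n C" and y: "y \<in> hullx n C"
  shows "t \<cdot>\<^sub>v y \<in> hullx n C"
proof -
  have Cc: "C \<subseteq> carrier_vec n" using S unfolding subsp_def by auto
  have yc: "y \<in> carrier_vec n" using y Cc unfolding hullx_def by auto
  have "t \<cdot>\<^sub>v y = t \<cdot>\<^sub>v y + 0 \<cdot>\<^sub>v y" using yc by auto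
  thus ?thesis using hullx_lin[OF S y y, of t 0] by simp
qed

lemma zero_hullx: "subsp n C \<Longrightarrow> 0\<^sub>v n \<in> hullx n C"
  unfolding hullx_def subsp_def by auto

lemma GI_char:
  fixes C :: "'a::{finite,field} vec set"
  assumes code: "is_code n k C" and odd: "odd (card (UNIV :: 'a set))"
  shows "(\<exists>a b. a \<noteq> 0 \<and> a + of_nat n * b \<noteq> 0 \<and> lcd_wrt n (Mab n a b) C)
     \<longleftrightarrow> LCD n C \<or> (\<exists>x\<in>Xset n. hullx n C = line x)"
proof -
  have S: "subsp n C" by (rule code_subsp[OF code])
  have Cc: "C \<subseteq> carrier_vec n" using S unfolding subsp_def by auto
  have two: "(2::'a) \<noteq> 0" by (rule two_ne_zero_odd[OF odd])
  have LCDh: "LCD n C \<longleftrightarrow> hullx n C = {0\<^sub>v n}" unfolding LCD_def code_hull_eq[OF S] ..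
  let ?o = "all_ones_vec n :: 'a vec"
  have form: "c \<bullet> (Mab n a b *\<^sub>v c') = a * (c' \<bullet> c) + b * (c \<bullet> ?o) * (c' \<bullet> ?o)"
    if "c \<in> C" "c' \<in> C" for a b c c'
    using Mab_form[of c n c' a b] comm_scalar_prod[of c n c'] that Cc by auto
  show ?thesis
  proof
    assume "\<exists>a b. a \<noteq> 0 \<and> a + of_nat n * b \<noteq> 0 \<and> lcd_wrt n (Mab n a b) C"
    then obtain a b where a: "a \<noteq> 0" and l: "lcd_wrt n (Mab n a b) C" by blast
    have key: "y = 0\<^sub>v n" if y: "y \<in> hullx n C" "y \<bullet> ?o = 0" for y
    proof -
      have yC: "y \<in> C" using y hullx_sub by auto
      have "\<forall>c\<in>C. c \<bullet> (Mab n a b *\<^sub>v y) = 0"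
        using y form[OF _ yC] unfolding hullx_def by auto
      thus ?thesis using l yC unfolding lcd_wrt_def by auto
    qed
    show "LCD n C \<or> (\<exists>x\<in>Xset n. hullx n C = line x)"
    proof (cases "hullx n C = {0\<^sub>v n}")
      case True thus ?thesis using LCDh by simp
    next
      case False
      then obtain x where x: "x \<in> hullx n C" "x \<noteq> 0\<^sub>v n" using zero_hullx[OF S] by blast
      have xC: "x \<in> C" using x hullx_sub by auto
      have xc: "x \<in> carrier_vec n" using xC Cc by auto
      have x1: "x \<bullet> ?o \<noteq> 0" using key x by auto
      have xx: "x \<bullet> x = 0" using x xC unfolding hullx_def by auto
      have "hullx n C = line x"
      proof
        show "line x \<subseteq> hullx n C" unfolding line_def using hullx_smult[OF S x(1)] by auto
        show "hullx n C \<subseteq> line x"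
        proof
          fix y assume y: "y \<in> hullx n C"
          have yc: "y \<in> carrier_vec n" using y hullx_sub Cc by auto
          define z where "z = (y \<bullet> ?o) \<cdot>\<^sub>v x + (- (x \<bullet> ?o)) \<cdot>\<^sub>v y"
          have zh: "z \<in> hullx n C" unfolding z_def by (rule hullx_lin[OF S x(1) y])
          have "z \<bullet> ?o = (y \<bullet> ?o) * (x \<bullet> ?o) + (- (x \<bullet> ?o)) * (y \<bullet> ?o)"
            unfolding z_def using xc yc by (simp add: add_scalar_prod_distrib[of _ n])
          hence "z \<bullet> ?o = 0" by simp
          hence z0: "z = 0\<^sub>v n" using key zh by auto
          have "y = ((y \<bullet> ?o) / (x \<bullet> ?o)) \<cdot>\<^sub>v x"
          proof (rule eq_vecI)
            fix i assume i: "i < dim_vec (((y \<bullet> ?o) / (x \<bullet> ?o)) \<cdot>\<^sub>v x)"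
            hence i': "i < n" using xc by simp
            have "z $ i = 0" using z0 i' by simp
            hence "(y \<bullet> ?o) * x $ i - (x \<bullet> ?o) * y $ i = 0" unfolding z_def using i' xc yc by simp
            thus "y $ i = (((y \<bullet> ?o) / (x \<bullet> ?o)) \<cdot>\<^sub>v x) $ i" using i' xc x1
              by (simp add: field_simps)
          qed (use xc yc in simp)
          thus "y \<in> line x" unfolding line_def by blast
        qed
      qed
      moreover have "x \<in> Xset n" unfolding Xset_def using xc xx x1 by auto
      ultimately show ?thesis by blast
    qed
  next
    assume "LCD n C \<or> (\<exists>x\<in>Xset n. hullx n C = line x)"
    thus "\<exists>a b. a \<noteq> 0 \<and> a + of_nat n * b \<noteq> 0 \<and> lcd_wrt n (Mab n a b) C"
    proof
      assume "LCD n C"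
      hence h: "hullx n C = {0\<^sub>v n}" using LCDh by simp
      have "lcd_wrt n (Mab n 1 0) C" unfolding lcd_wrt_def
      proof (intro ballI impI)
        fix c' assume c': "c' \<in> C" and o: "\<forall>c\<in>C. c \<bullet> (Mab n 1 0 *\<^sub>v c') = 0"
        have "c' \<in> hullx n C" unfolding hullx_def using c' o form[OF _ c', of _ 1 0] by auto
        thus "c' = 0\<^sub>v n" using h by auto
      qed
      thus ?thesis by (intro exI[of _ 1] exI[of _ 0]) simp
    next
      assume "\<exists>x\<in>Xset n. hullx n C = line x"
      then obtain x where x: "x \<in> Xset n" and h: "hullx n C = line x" by blast
      have x1: "x \<bullet> ?o \<noteq> 0" using x unfolding Xset_def by auto
      have xc: "x \<in> carrier_vec n" using x unfolding Xset_def by auto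
      have xh: "x \<in> hullx n C" unfolding h line_def using xc by (intro image_eqI[of _ _ 1]) auto
      have xC: "x \<in> C" using xh hullx_sub by auto
      define b :: 'a where "b = (if 1 + of_nat n = (0::'a) then -1 else 1)"
      have b0: "b \<noteq> 0" unfolding b_def by simp
      have ab: "1 + of_nat n * b \<noteq> 0"
      proof (cases "1 + of_nat n = (0::'a)")
        case True
        hence "(of_nat n :: 'a) = -1" by (simp add: eq_neg_iff_add_eq_0 add.commute)
        thus ?thesis using True two unfolding b_def by simp
      next
        case False thus ?thesis unfolding b_def by simp
      qed
      have "lcd_wrt n (Mab n 1 b) C" unfolding lcd_wrt_def
      proof (intro ballI impI)
        fix c' assume c': "c' \<in> C" and o: "\<forall>c\<in>C. c \<bullet> (Mab n 1 b *\<^sub>v c') = 0"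
        have "c' \<bullet> x = 0" using xh c' unfolding hullx_def
          using comm_scalar_prod[of x n c'] Cc xc by auto
        hence "b * (x \<bullet> ?o) * (c' \<bullet> ?o) = 0" using o xC form[OF xC c', of 1 b] by auto
        hence c'1: "c' \<bullet> ?o = 0" using b0 x1 by simp
        have "c' \<in> hullx n C" unfolding hullx_def using c' o form[OF _ c', of _ 1 b] c'1 by auto
        then obtain t where t: "c' = t \<cdot>\<^sub>v x" unfolding h line_def by auto
        have "t * (x \<bullet> ?o) = 0" using c'1 xc unfolding t by simp
        hence "t = 0" using x1 by simp
        thus "c' = 0\<^sub>v n" using t xc by auto
      qed
      thus ?thesis using ab by (intro exI[of _ 1] exI[of _ b]) simp
    qed
  qed
qed


lemma smult_inj:
  fixes x :: "'a::field vec"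
  assumes xc: "x \<in> carrier_vec n" and x0: "x \<noteq> 0\<^sub>v n"
  shows "inj (\<lambda>t. t \<cdot>\<^sub>v x)"
proof (rule injI)
  fix s t :: 'a assume e: "s \<cdot>\<^sub>v x = t \<cdot>\<^sub>v x"
  obtain i where i: "i < n" "x $ i \<noteq> 0" using x0 xc by (metis eq_vecI carrier_vecD index_zero_vec(1,2))
  have "(s \<cdot>\<^sub>v x) $ i = (t \<cdot>\<^sub>v x) $ i" using e by simp
  hence "s * x $ i = t * x $ i" using i xc by simp
  thus "s = t" using i by simp
qed

lemma Xset_ne0: "x \<in> Xset n \<Longrightarrow> x \<noteq> 0\<^sub>v n"
  unfolding Xset_def by auto

lemma line_eq_iff:
  fixes x0 :: "'a::field vec"
  assumes x0: "x0 \<in> Xset n"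
  shows "(x \<in> Xset n \<and> line x0 = line x) \<longleftrightarrow> x \<in> line x0 - {0\<^sub>v n}"
proof
  assume a: "x \<in> Xset n \<and> line x0 = line x"
  have xc: "x \<in> carrier_vec n" using a unfolding Xset_def by auto
  have "x \<in> line x" unfolding line_def using xc by (intro image_eqI[of _ _ 1]) auto
  thus "x \<in> line x0 - {0\<^sub>v n}" using a Xset_ne0 by auto
next
  assume "x \<in> line x0 - {0\<^sub>v n}"
  then obtain t where t: "x = t \<cdot>\<^sub>v x0" "x \<noteq> 0\<^sub>v n" unfolding line_def by auto
  have xc0: "x0 \<in> carrier_vec n" and xx: "x0 \<bullet> x0 = 0" and x1: "x0 \<bullet> all_ones_vec n \<noteq> 0"
    using x0 unfolding Xset_def by auto
  have t0: "t \<noteq> 0" using t xc0 by auto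
  have "x \<in> Xset n" unfolding Xset_def t(1) using xc0 xx x1 t0 by simp
  moreover have "line x0 = line x"
  proof
    show "line x0 \<subseteq> line x" unfolding line_def t(1)
    proof
      fix y assume "y \<in> range (\<lambda>s. s \<cdot>\<^sub>v x0)"
      then obtain s where "y = s \<cdot>\<^sub>v x0" by auto
      hence "y = (s / t) \<cdot>\<^sub>v (t \<cdot>\<^sub>v x0)" using t0 by (simp add: smult_smult_assoc)
      thus "y \<in> range (\<lambda>s. s \<cdot>\<^sub>v (t \<cdot>\<^sub>v x0))" by blast
    qed
    show "line x \<subseteq> line x0" unfolding line_def t(1)
      by (auto simp: smult_smult_assoc)
  qed
  ultimately show "x \<in> Xset n \<and> line x0 = line x" by simp
qed

lemma card_line:
  fixes x0 :: "'a::{finite,field} vec"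
  assumes x0: "x0 \<in> Xset n"
  shows "card (line x0 - {0\<^sub>v n}) = card (UNIV :: 'a set) - 1"
proof -
  have xc0: "x0 \<in> carrier_vec n" using x0 unfolding Xset_def by auto
  have inj: "inj (\<lambda>t. t \<cdot>\<^sub>v x0)" by (rule smult_inj[OF xc0 Xset_ne0[OF x0]])
  have "line x0 - {0\<^sub>v n} = (\<lambda>t. t \<cdot>\<^sub>v x0) ` (UNIV - {0})"
  proof -
    have z: "0 \<cdot>\<^sub>v x0 = 0\<^sub>v n" using xc0 by (intro eq_vecI) auto
    have "t \<cdot>\<^sub>v x0 = 0\<^sub>v n \<longleftrightarrow> t = 0" for t :: 'a
      using z inj[unfolded inj_def, rule_format, of t 0] xc0 by auto
    thus ?thesis unfolding line_def by auto
  qed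
  also have "card \<dots> = card (UNIV - {0::'a})" by (rule card_image) (use inj in \<open>auto simp: inj_on_def inj_def\<close>)
  also have "\<dots> = card (UNIV :: 'a set) - 1" by (simp add: card_Diff_singleton)
  finally show ?thesis .
qed

lemma code_carrier: "is_code n k C \<Longrightarrow> C \<subseteq> carrier_vec n"
  using code_subsp unfolding subsp_def by blast

lemma finite_codes: "finite {C :: 'a::{finite,field} vec set. is_code n k C \<and> P C}"
proof -
  have "{C :: 'a vec set. is_code n k C \<and> P C} \<subseteq> Pow (carrier_vec n)" using code_carrier by blast
  thus ?thesis using finite_carrier_vec by (metis finite_Pow_iff rev_finite_subset)
qed

lemma double_count:
  fixes L :: nat
  assumes all: "\<And>x. x \<in> Xset n \<Longrightarrow> card {C :: 'a::{finite,field} vec set. is_code n k C \<and> hullx n C = line x} = L"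
  shows "(card (UNIV :: 'a set) - 1) * card {C :: 'a vec set. is_code n k C \<and> (\<exists>x\<in>Xset n. hullx n C = line x)}
         = card (Xset n :: 'a vec set) * L"
proof -
  let ?S = "\<lambda>x. {C :: 'a vec set. is_code n k C \<and> hullx n C = line x}"
  let ?R = "{C :: 'a vec set. is_code n k C \<and> (\<exists>x\<in>Xset n. hullx n C = line x)}"
  let ?T = "\<lambda>C. {x \<in> Xset n. hullx n C = line x}"
  have finX: "finite (Xset n :: 'a vec set)" using finite_carrier_vec
    by (metis (no_types, lifting) Xset_def mem_Collect_eq rev_finite_subset subsetI)
  have finS: "finite (?S x)" for x using finite_codes[of n k "\<lambda>C. hullx n C = line x"] by simp
  have finR: "finite ?R" using finite_codes[of n k "\<lambda>C. \<exists>x\<in>Xset n. hullx n C = line x"] by simp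
  have "card (SIGMA x:Xset n. ?S x) = (\<Sum>x\<in>Xset n. card (?S x))"
    by (rule card_SigmaI) (use finX finS in auto)
  also have "\<dots> = card (Xset n :: 'a vec set) * L" using all by simp
  finally have c1: "card (SIGMA x:Xset n. ?S x) = card (Xset n :: 'a vec set) * L" .
  have "(SIGMA x:Xset n. ?S x) = prod.swap ` (SIGMA C:?R. ?T C)" by (auto simp: image_iff)
  hence "card (SIGMA x:Xset n. ?S x) = card (SIGMA C:?R. ?T C)"
    by (simp add: card_image)
  also have "\<dots> = (\<Sum>C\<in>?R. card (?T C))"
    by (rule card_SigmaI) (use finR finX in auto)
  also have "\<dots> = (\<Sum>C\<in>?R. card (UNIV :: 'a set) - 1)"
  proof (rule sum.cong)
    fix C assume "C \<in> ?R"
    then obtain x0 where x0: "x0 \<in> Xset n" "hullx n C = line x0" by auto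
    have "?T C = line x0 - {0\<^sub>v n}" using line_eq_iff[OF x0(1)] x0(2) by auto
    thus "card (?T C) = card (UNIV :: 'a set) - 1" using card_line[OF x0(1)] by simp
  qed simp
  finally show ?thesis using c1 by (simp add: mult.commute)
qed


lemma dot_lin_l:
  fixes u w z :: "'a::field vec"
  assumes "u \<in> carrier_vec n" "w \<in> carrier_vec n" "z \<in> carrier_vec n"
  shows "(a \<cdot>\<^sub>v u + b \<cdot>\<^sub>v w) \<bullet> z = a * (u \<bullet> z) + b * (w \<bullet> z)"
proof -
  have "(a \<cdot>\<^sub>v u + b \<cdot>\<^sub>v w) \<bullet> z = (a \<cdot>\<^sub>v u) \<bullet> z + (b \<cdot>\<^sub>v w) \<bullet> z"
    by (rule add_scalar_prod_distrib[of _ n]) (use assms in auto)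
  thus ?thesis using assms by simp
qed

lemma dot_lin_r:
  fixes u w z :: "'a::field vec"
  assumes "u \<in> carrier_vec n" "w \<in> carrier_vec n" "z \<in> carrier_vec n"
  shows "z \<bullet> (a \<cdot>\<^sub>v u + b \<cdot>\<^sub>v w) = a * (z \<bullet> u) + b * (z \<bullet> w)"
proof -
  have "z \<bullet> (a \<cdot>\<^sub>v u + b \<cdot>\<^sub>v w) = z \<bullet> (a \<cdot>\<^sub>v u) + z \<bullet> (b \<cdot>\<^sub>v w)"
    by (rule scalar_prod_add_distrib[of _ n]) (use assms in auto)
  thus ?thesis using assms by simp
qed

definition refl_mat :: "nat \<Rightarrow> 'a::field vec \<Rightarrow> 'a mat" where
  "refl_mat n v = mat n n (\<lambda>(i,j). (if i = j then 1 else 0) - (2 / (v \<bullet> v)) * v $ i * v $ j)"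

lemma refl_mat_carrier[simp]: "refl_mat n v \<in> carrier_mat n n"
  unfolding refl_mat_def by simp

lemma refl_mult_carrier[simp]: "u \<in> carrier_vec n \<Longrightarrow> refl_mat n v *\<^sub>v u \<in> carrier_vec n"
  by (rule mult_mat_vec_carrier[OF refl_mat_carrier])

lemma refl_vec:
  fixes v u :: "'a::field vec"
  assumes v: "v \<in> carrier_vec n" and u: "u \<in> carrier_vec n"
  shows "refl_mat n v *\<^sub>v u = 1 \<cdot>\<^sub>v u + (- ((2 / (v \<bullet> v)) * (v \<bullet> u))) \<cdot>\<^sub>v v"
proof (rule eq_vecI)
  fix i assume "i < dim_vec (1 \<cdot>\<^sub>v u + (- ((2 / (v \<bullet> v)) * (v \<bullet> u))) \<cdot>\<^sub>v v)"
  hence i: "i < n" using v by simp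
  let ?r = "2 / (v \<bullet> v)"
  have "(refl_mat n v *\<^sub>v u) $ i = (\<Sum>j\<in>{0..<n}. ((if i = j then 1 else 0) - ?r * v $ i * v $ j) * u $ j)"
    using i u unfolding refl_mat_def by (auto simp: scalar_prod_def intro!: sum.cong)
  also have "\<dots> = (\<Sum>j\<in>{0..<n}. (if j = i then u $ j else 0) - ?r * v $ i * (v $ j * u $ j))"
    by (rule sum.cong) (auto simp: algebra_simps)
  also have "\<dots> = u $ i - ?r * v $ i * (v \<bullet> u)"
    using i u by (simp add: sum_subtractf sum_distrib_left scalar_prod_def)
  finally show "(refl_mat n v *\<^sub>v u) $ i = (1 \<cdot>\<^sub>v u + (- (?r * (v \<bullet> u))) \<cdot>\<^sub>v v) $ i"
    using i u v by (simp add: algebra_simps)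
qed (use v u in \<open>auto simp: refl_mat_def\<close>)

lemma refl_props:
  fixes v :: "'a::field vec"
  assumes v: "v \<in> carrier_vec n" and vv: "v \<bullet> v \<noteq> 0"
  shows "\<And>u. u \<in> carrier_vec n \<Longrightarrow> refl_mat n v *\<^sub>v (refl_mat n v *\<^sub>v u) = u"
    "\<And>u w. u \<in> carrier_vec n \<Longrightarrow> w \<in> carrier_vec n \<Longrightarrow> (refl_mat n v *\<^sub>v u) \<bullet> (refl_mat n v *\<^sub>v w) = u \<bullet> w"
proof -
  let ?r = "2 / (v \<bullet> v)"
  have rr: "?r * ?r * (v \<bullet> v) = 2 * ?r" using vv by (simp add: field_simps)
  have vdot: "v \<bullet> (refl_mat n v *\<^sub>v u) = - (v \<bullet> u)" if u: "u \<in> carrier_vec n" for u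
  proof -
    have "v \<bullet> (refl_mat n v *\<^sub>v u) = 1 * (v \<bullet> u) + (- (?r * (v \<bullet> u))) * (v \<bullet> v)"
      unfolding refl_vec[OF v u] by (rule dot_lin_r[OF u v v])
    thus ?thesis using vv by (simp add: field_simps)
  qed
  show "refl_mat n v *\<^sub>v (refl_mat n v *\<^sub>v u) = u" if u: "u \<in> carrier_vec n" for u
  proof -
    have Tu: "refl_mat n v *\<^sub>v u \<in> carrier_vec n" using u by auto
    show ?thesis unfolding refl_vec[OF v Tu] vdot[OF u] unfolding refl_vec[OF v u]
      using u v by (intro eq_vecI) (auto simp: algebra_simps)
  qed
  show "(refl_mat n v *\<^sub>v u) \<bullet> (refl_mat n v *\<^sub>v w) = u \<bullet> w"
    if u: "u \<in> carrier_vec n" and w: "w \<in> carrier_vec n" for u w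
  proof -
    have Tw: "refl_mat n v *\<^sub>v w \<in> carrier_vec n" using w by auto
    have "(refl_mat n v *\<^sub>v u) \<bullet> (refl_mat n v *\<^sub>v w)
       = 1 * (u \<bullet> (refl_mat n v *\<^sub>v w)) + (- (?r * (v \<bullet> u))) * (v \<bullet> (refl_mat n v *\<^sub>v w))"
      unfolding refl_vec[OF v u] by (rule dot_lin_l[OF u v Tw])
    also have "u \<bullet> (refl_mat n v *\<^sub>v w) = 1 * (u \<bullet> w) + (- (?r * (v \<bullet> w))) * (u \<bullet> v)"
      unfolding refl_vec[OF v w] by (rule dot_lin_r[OF w v u])
    also have "v \<bullet> (refl_mat n v *\<^sub>v w) = - (v \<bullet> w)" by (rule vdot[OF w])
    finally show ?thesis using comm_scalar_prod[OF u v] by (simp add: algebra_simps)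
  qed
qed

lemma iso_card:
  fixes T :: "'a::{finite,field} mat"
  assumes T: "T \<in> carrier_mat n n"
    and inv: "\<And>u. u \<in> carrier_vec n \<Longrightarrow> T *\<^sub>v (T *\<^sub>v u) = u"
    and dot: "\<And>u w. u \<in> carrier_vec n \<Longrightarrow> w \<in> carrier_vec n \<Longrightarrow> (T *\<^sub>v u) \<bullet> (T *\<^sub>v w) = u \<bullet> w"
    and x: "x \<in> carrier_vec n"
  shows "card {C. is_code n k C \<and> hullx n C = line x} = card {C. is_code n k C \<and> hullx n C = line (T *\<^sub>v x)}"
proof -
  let ?f = "\<lambda>C. (\<lambda>c. T *\<^sub>v c) ` C"
  have injT: "inj_on (\<lambda>v. T *\<^sub>v v) (carrier_vec n)"
  proof (rule inj_onI)
    fix u w assume u: "u \<in> carrier_vec n" and w: "w \<in> carrier_vec n" and e: "T *\<^sub>v u = T *\<^sub>v w"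
    have "u = T *\<^sub>v (T *\<^sub>v u)" using inv[OF u] by simp
    also have "\<dots> = T *\<^sub>v (T *\<^sub>v w)" unfolding e ..
    also have "\<dots> = w" using inv[OF w] .
    finally show "u = w" .
  qed
  have Tc: "T *\<^sub>v u \<in> carrier_vec n" if "u \<in> carrier_vec n" for u using T that by auto
  have ff: "?f (?f C) = C" if "C \<subseteq> carrier_vec n" for C
  proof -
    have "?f (?f C) = (\<lambda>c. T *\<^sub>v (T *\<^sub>v c)) ` C" by (simp add: image_image)
    also have "\<dots> = (\<lambda>c. c) ` C" using that inv by (intro image_cong) auto
    finally show ?thesis by simp
  qed
  have code_img: "is_code n k (?f C)" if ic: "is_code n k C" for C
  proof -
    obtain g where "is_lcode n k g C" using ic is_code_iff by blast
    from lcode_image[OF this T injT] show ?thesis using is_code_iff by blast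
  qed
  have hull_img: "hullx n (?f C) = ?f (hullx n C)" if CC: "C \<subseteq> carrier_vec n" for C
  proof
    show "hullx n (?f C) \<subseteq> ?f (hullx n C)"
    proof
      fix c assume c: "c \<in> hullx n (?f C)"
      then obtain c0 where c0: "c0 \<in> C" "c = T *\<^sub>v c0" unfolding hullx_def by auto
      have "c0 \<bullet> c' = 0" if c': "c' \<in> C" for c'
      proof -
        have "c0 \<in> carrier_vec n" "c' \<in> carrier_vec n" using c0(1) c' CC by auto
        hence "c0 \<bullet> c' = (T *\<^sub>v c0) \<bullet> (T *\<^sub>v c')" using dot by simp
        also have "\<dots> = 0"
        proof -
          have i: "T *\<^sub>v c' \<in> ?f C" using c' by blast
          from c have "\<forall>c'\<in>?f C. c \<bullet> c' = 0" unfolding hullx_def by blast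
          thus ?thesis using i c0(2) by blast
        qed
        finally show ?thesis .
      qed
      hence "c0 \<in> hullx n C" using c0(1) unfolding hullx_def by blast
      thus "c \<in> ?f (hullx n C)" using c0(2) by blast
    qed
    show "?f (hullx n C) \<subseteq> hullx n (?f C)"
    proof
      fix c assume "c \<in> ?f (hullx n C)"
      then obtain c0 where c0: "c0 \<in> hullx n C" "c = T *\<^sub>v c0" by blast
      have c0C: "c0 \<in> C" using c0(1) unfolding hullx_def by blast
      have "c \<bullet> c' = 0" if c': "c' \<in> ?f C" for c'
      proof -
        obtain c1 where c1: "c1 \<in> C" "c' = T *\<^sub>v c1" using c' by blast
        have "c0 \<in> carrier_vec n" "c1 \<in> carrier_vec n" using c0C c1(1) CC by auto
        hence "c \<bullet> c' = c0 \<bullet> c1" unfolding c0(2) c1(2) using dot by simp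
        also have "\<dots> = 0" using c0(1) c1(1) unfolding hullx_def by blast
        finally show ?thesis .
      qed
      moreover have "c \<in> ?f C" using c0(2) c0C by blast
      ultimately show "c \<in> hullx n (?f C)" unfolding hullx_def by blast
    qed
  qed
  have line_img: "?f (line y) = line (T *\<^sub>v y)" if "y \<in> carrier_vec n" for y
    unfolding line_def image_image using mult_mat_vec[OF T that] by simp
  have xT: "T *\<^sub>v (T *\<^sub>v x) = x" by (rule inv[OF x])
  have map: "?f C \<in> {C. is_code n k C \<and> hullx n C = line (T *\<^sub>v y)}"
    if "C \<in> {C. is_code n k C \<and> hullx n C = line y}" "y \<in> carrier_vec n" for C y
  proof -
    have C: "is_code n k C" "hullx n C = line y" using that(1) by auto
    have "hullx n (?f C) = line (T *\<^sub>v y)"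
      unfolding hull_img[OF code_carrier[OF C(1)]] C(2) by (rule line_img[OF that(2)])
    thus ?thesis using code_img[OF C(1)] by blast
  qed
  have "?f ` {C. is_code n k C \<and> hullx n C = line x} = {C. is_code n k C \<and> hullx n C = line (T *\<^sub>v x)}"
  proof
    show "?f ` {C. is_code n k C \<and> hullx n C = line x} \<subseteq> {C. is_code n k C \<and> hullx n C = line (T *\<^sub>v x)}"
      using map[OF _ x] by auto
    show "{C. is_code n k C \<and> hullx n C = line (T *\<^sub>v x)} \<subseteq> ?f ` {C. is_code n k C \<and> hullx n C = line x}"
    proof
      fix C assume C: "C \<in> {C. is_code n k C \<and> hullx n C = line (T *\<^sub>v x)}"
      have a: "?f C \<in> {C. is_code n k C \<and> hullx n C = line x}"
        using map[OF C Tc[OF x]] xT by simp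
      have b: "?f (?f C) = C" by (rule ff[OF code_carrier[of n k]]) (use C in simp)
      show "C \<in> ?f ` {C. is_code n k C \<and> hullx n C = line x}"
        using a b[symmetric] by blast
    qed
  qed
  moreover have inj: "inj_on ?f {C. is_code n k C \<and> hullx n C = line x}"
  proof (rule inj_on_inverseI[of _ ?f])
    fix C assume "C \<in> {C. is_code n k C \<and> hullx n C = line x}"
    thus "?f (?f C) = C" by (intro ff code_carrier[of n k]) simp
  qed
  ultimately show ?thesis using card_image[OF inj] by simp
qed


definition Sx :: "nat \<Rightarrow> nat \<Rightarrow> 'a::field vec \<Rightarrow> 'a vec set set" where
  "Sx n k x = {C. is_code n k C \<and> hullx n C = line x}"

lemma card_S_adj:
  fixes x y :: "'a::{finite,field} vec"
  assumes two: "(2::'a) \<noteq> 0" and x: "x \<in> carrier_vec n" and y: "y \<in> carrier_vec n"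
    and xx: "x \<bullet> x = 0" and yy: "y \<bullet> y = 0" and xy: "x \<bullet> y \<noteq> 0"
  shows "card (Sx n k x) = card (Sx n k y)"
proof -
  define v where "v = 1 \<cdot>\<^sub>v x + (-1) \<cdot>\<^sub>v y"
  have vc: "v \<in> carrier_vec n" unfolding v_def using x y by simp
  have yx: "y \<bullet> x = x \<bullet> y" using comm_scalar_prod[OF y x] .
  have vx: "v \<bullet> x = - (x \<bullet> y)" unfolding v_def dot_lin_l[OF x y x] using xx yx by simp
  have vy: "v \<bullet> y = x \<bullet> y" unfolding v_def dot_lin_l[OF x y y] using yy by simp
  have vv: "v \<bullet> v = - 2 * (x \<bullet> y)"
  proof -
    have "(1 \<cdot>\<^sub>v x + (-1) \<cdot>\<^sub>v y) \<bullet> v = 1 * (x \<bullet> v) + (-1) * (y \<bullet> v)" by (rule dot_lin_l[OF x y vc])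
    hence "v \<bullet> v = 1 * (x \<bullet> v) + (-1) * (y \<bullet> v)" by (simp only: v_def[symmetric])
    also have "x \<bullet> v = v \<bullet> x" using comm_scalar_prod[OF x vc] .
    also have "y \<bullet> v = v \<bullet> y" using comm_scalar_prod[OF y vc] .
    finally show ?thesis unfolding vx vy by simp
  qed
  have vv0: "v \<bullet> v \<noteq> 0" unfolding vv using two xy by simp
  have Tx: "refl_mat n v *\<^sub>v x = y"
  proof -
    have r: "(2 / (v \<bullet> v)) * (v \<bullet> x) = 1" unfolding vv vx using xy two by (simp add: field_simps)
    show ?thesis unfolding refl_vec[OF vc x] r unfolding v_def using x y
      by (intro eq_vecI) auto
  qed
  note rp = refl_props[OF vc vv0]
  have "card {C. is_code n k C \<and> hullx n C = line x}
      = card {C. is_code n k C \<and> hullx n C = line (refl_mat n v *\<^sub>v x)}"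
    by (rule iso_card[OF refl_mat_carrier rp(1) rp(2) x])
  thus ?thesis unfolding Sx_def Tx .
qed

lemma card_S_eq:
  fixes x y :: "'a::{finite,field} vec"
  assumes two: "(2::'a) \<noteq> 0" and x: "x \<in> carrier_vec n" and y: "y \<in> carrier_vec n"
    and xx: "x \<bullet> x = 0" and yy: "y \<bullet> y = 0" and x0: "x \<noteq> 0\<^sub>v n" and y0: "y \<noteq> 0\<^sub>v n"
  shows "card (Sx n k x) = card (Sx n k y)"
proof (cases "x \<bullet> y = 0")
  case False thus ?thesis using card_S_adj[OF two x y xx yy] by simp
next
  case True
  have yx: "y \<bullet> x = 0" using comm_scalar_prod[OF y x] True by simp
  obtain i where i: "i < n" "x $ i \<noteq> 0" using x0 x by (metis eq_vecI carrier_vecD index_zero_vec(1,2))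
  obtain j where j: "j < n" "y $ j \<noteq> 0" using y0 y by (metis eq_vecI carrier_vecD index_zero_vec(1,2))
  have xe: "\<And>l. l < n \<Longrightarrow> x \<bullet> unit_vec n l = x $ l" using x by simp
  have ye: "\<And>l. l < n \<Longrightarrow> y \<bullet> unit_vec n l = y $ l" using y by simp
  obtain w where w: "w \<in> carrier_vec n" "x \<bullet> w \<noteq> 0" "y \<bullet> w \<noteq> 0"
  proof (cases "y $ i \<noteq> 0")
    case True thus ?thesis using that[of "unit_vec n i"] i xe ye by simp
  next
    case yi: False
    show ?thesis
    proof (cases "x $ j \<noteq> 0")
      case True thus ?thesis using that[of "unit_vec n j"] j xe ye by simp
    next
      case False
      have "x \<bullet> (1 \<cdot>\<^sub>v unit_vec n i + 1 \<cdot>\<^sub>v unit_vec n j) = x $ i"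
        using dot_lin_r[of "unit_vec n i" n "unit_vec n j" x 1 1] x i j xe False by simp
      moreover have "y \<bullet> (1 \<cdot>\<^sub>v unit_vec n i + 1 \<cdot>\<^sub>v unit_vec n j) = y $ j"
        using dot_lin_r[of "unit_vec n i" n "unit_vec n j" y 1 1] y i j ye yi by simp
      ultimately show ?thesis using that[of "1 \<cdot>\<^sub>v unit_vec n i + 1 \<cdot>\<^sub>v unit_vec n j"] i j by simp
    qed
  qed
  define t where "t = - (w \<bullet> w) / (2 * (x \<bullet> w))"
  define z where "z = 1 \<cdot>\<^sub>v w + t \<cdot>\<^sub>v x"
  have zc: "z \<in> carrier_vec n" unfolding z_def using w x by simp
  have wx: "w \<bullet> x = x \<bullet> w" using comm_scalar_prod[OF w(1) x] .
  have xz: "x \<bullet> z = x \<bullet> w" unfolding z_def dot_lin_r[OF w(1) x x] using xx by simp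
  have yz: "y \<bullet> z = y \<bullet> w" unfolding z_def dot_lin_r[OF w(1) x y] using yx by simp
  have zz: "z \<bullet> z = 0"
  proof -
    have "(1 \<cdot>\<^sub>v w + t \<cdot>\<^sub>v x) \<bullet> z = 1 * (w \<bullet> z) + t * (x \<bullet> z)" by (rule dot_lin_l[OF w(1) x zc])
    hence "z \<bullet> z = 1 * (w \<bullet> z) + t * (x \<bullet> z)" by (simp only: z_def[symmetric])
    also have "w \<bullet> z = w \<bullet> w + t * (w \<bullet> x)" unfolding z_def dot_lin_r[OF w(1) x w(1)] by simp
    finally have "z \<bullet> z = w \<bullet> w + 2 * t * (x \<bullet> w)" unfolding xz wx by (simp add: algebra_simps)
    thus ?thesis unfolding t_def using w(2) two by (simp add: field_simps)
  qed
  have z0: "z \<noteq> 0\<^sub>v n" using xz w(2) x by auto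
  have "card (Sx n k x) = card (Sx n k z)" using card_S_adj[OF two x zc xx zz] xz w(2) by simp
  also have "\<dots> = card (Sx n k y)"
    using card_S_adj[OF two zc y zz yy] comm_scalar_prod[OF zc y] yz w(3) by simp
  finally show ?thesis .
qed


lemma lc_shift:
  fixes x0 :: "'a::field vec" and Phi :: "'a mat"
  assumes Phi: "Phi \<in> carrier_mat n m" and g: "\<And>i. i < k' \<Longrightarrow> g i \<in> carrier_vec m"
    and x0: "x0 \<in> carrier_vec n"
  shows "lc n (Suc k') (\<lambda>i. if i = 0 then x0 else Phi *\<^sub>v g (i - 1)) y
       = y $ 0 \<cdot>\<^sub>v x0 + Phi *\<^sub>v lc m k' g (vec k' (\<lambda>i. y $ Suc i))"
proof (rule eq_vecI)
  fix j assume "j < dim_vec (y $ 0 \<cdot>\<^sub>v x0 + Phi *\<^sub>v lc m k' g (vec k' (\<lambda>i. y $ Suc i)))"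
  hence j: "j < n" using Phi by simp
  have e: "Phi *\<^sub>v lc m k' g (vec k' (\<lambda>i. y $ Suc i)) = lc n k' (\<lambda>i. Phi *\<^sub>v g i) (vec k' (\<lambda>i. y $ Suc i))"
    by (rule mat_lc[OF Phi g])
  have "lc n (Suc k') (\<lambda>i. if i = 0 then x0 else Phi *\<^sub>v g (i - 1)) y $ j
      = (\<Sum>i\<in>{0..<Suc k'}. y $ i * (if i = 0 then x0 else Phi *\<^sub>v g (i - 1)) $ j)" using j by simp
  also have "\<dots> = y $ 0 * x0 $ j + (\<Sum>i\<in>{0..<k'}. y $ Suc i * (Phi *\<^sub>v g i) $ j)"
    by (subst sum.atLeast0_lessThan_Suc_shift) simp
  also have "\<dots> = (y $ 0 \<cdot>\<^sub>v x0 + Phi *\<^sub>v lc m k' g (vec k' (\<lambda>i. y $ Suc i))) $ j"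
    unfolding e using j x0 by simp
  finally show "lc n (Suc k') (\<lambda>i. if i = 0 then x0 else Phi *\<^sub>v g (i - 1)) y $ j
      = (y $ 0 \<cdot>\<^sub>v x0 + Phi *\<^sub>v lc m k' g (vec k' (\<lambda>i. y $ Suc i))) $ j" .
qed (use Phi in simp)

definition skip :: "nat \<Rightarrow> nat \<Rightarrow> nat" where "skip i0 j = (if j < i0 then j else Suc j)"

definition spread :: "nat \<Rightarrow> nat \<Rightarrow> 'a::field vec \<Rightarrow> 'a vec" where
  "spread k' i0 z = vec (Suc k') (\<lambda>i. if i < i0 then z $ i else if i = i0 then 0 else z $ (i - 1))"

lemma skip_inj: "inj_on (skip i0) A"
  unfolding skip_def inj_on_def by auto

lemma skip_image: "i0 < Suc k' \<Longrightarrow> skip i0 ` {0..<k'} = {0..<Suc k'} - {i0}"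
proof
  assume "i0 < Suc k'"
  show "skip i0 ` {0..<k'} \<subseteq> {0..<Suc k'} - {i0}" unfolding skip_def by auto
  show "{0..<Suc k'} - {i0} \<subseteq> skip i0 ` {0..<k'}"
  proof
    fix i assume i: "i \<in> {0..<Suc k'} - {i0}"
    show "i \<in> skip i0 ` {0..<k'}"
    proof (cases "i < i0")
      case True thus ?thesis using i \<open>i0 < Suc k'\<close> unfolding skip_def by (intro image_eqI[of _ _ i]) auto
    next
      case False thus ?thesis using i unfolding skip_def by (intro image_eqI[of _ _ "i - 1"]) auto
    qed
  qed
qed

lemma sum_skip:
  fixes f :: "nat \<Rightarrow> 'b::comm_monoid_add"
  assumes i0: "i0 < Suc k'" and f0: "f i0 = 0"
  shows "(\<Sum>i\<in>{0..<Suc k'}. f i) = (\<Sum>j\<in>{0..<k'}. f (skip i0 j))"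
proof -
  have i0': "i0 \<in> {0..<Suc k'}" using i0 by simp
  have "(\<Sum>i\<in>{0..<Suc k'}. f i) = f i0 + (\<Sum>i\<in>{0..<Suc k'} - {i0}. f i)"
    by (rule sum.remove[OF finite_atLeastLessThan i0'])
  hence "(\<Sum>i\<in>{0..<Suc k'}. f i) = (\<Sum>i\<in>{0..<Suc k'} - {i0}. f i)" using f0 by simp
  also have "\<dots> = (\<Sum>i\<in>skip i0 ` {0..<k'}. f i)" unfolding skip_image[OF i0] ..
  also have "\<dots> = (\<Sum>j\<in>{0..<k'}. f (skip i0 j))"
    using sum.reindex[OF skip_inj[of i0 "{0..<k'}"], of f] by (simp add: comp_def)
  finally show ?thesis .
qed

lemma spread_carrier[simp]: "spread k' i0 z \<in> carrier_vec (Suc k')" unfolding spread_def by simp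

lemma spread_i0: "i0 < Suc k' \<Longrightarrow> spread k' i0 z $ i0 = 0" unfolding spread_def by simp

lemma spread_skip: "j < k' \<Longrightarrow> spread k' i0 z $ skip i0 j = z $ j"
  unfolding spread_def skip_def by auto

lemma lc_spread:
  fixes z :: "'a::field vec"
  assumes i0: "i0 < Suc k'"
  shows "lc n (Suc k') g (spread k' i0 z) = lc n k' (\<lambda>j. g (skip i0 j)) z"
proof (rule eq_vecI)
  fix l assume "l < dim_vec (lc n k' (\<lambda>j. g (skip i0 j)) z)"
  hence l: "l < n" by simp
  have "lc n (Suc k') g (spread k' i0 z) $ l = (\<Sum>i\<in>{0..<Suc k'}. spread k' i0 z $ i * g i $ l)"
    using l by simp
  also have "\<dots> = (\<Sum>j\<in>{0..<k'}. spread k' i0 z $ skip i0 j * g (skip i0 j) $ l)"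
    by (rule sum_skip[OF i0]) (simp add: spread_i0[OF i0])
  also have "\<dots> = (\<Sum>j\<in>{0..<k'}. z $ j * g (skip i0 j) $ l)"
    by (rule sum.cong) (auto simp: spread_skip)
  finally show "lc n (Suc k') g (spread k' i0 z) $ l = lc n k' (\<lambda>j. g (skip i0 j)) z $ l" using l by simp
qed simp

lemma unspread:
  fixes y :: "'a::field vec"
  assumes i0: "i0 < Suc k'" and y: "y \<in> carrier_vec (Suc k')" and y0: "y $ i0 = 0"
  shows "spread k' i0 (vec k' (\<lambda>j. y $ skip i0 j)) = y"
proof (rule eq_vecI)
  fix i assume "i < dim_vec y"
  hence i: "i < Suc k'" using y by simp
  show "spread k' i0 (vec k' (\<lambda>j. y $ skip i0 j)) $ i = y $ i"
    using i i0 y0 unfolding spread_def skip_def by auto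
qed (use y in \<open>simp add: spread_def\<close>)

lemma spread_inj:
  fixes z z' :: "'a::field vec"
  assumes "z \<in> carrier_vec k'" "z' \<in> carrier_vec k'" "spread k' i0 z = spread k' i0 z'"
  shows "z = z'"
proof (rule eq_vecI)
  fix j assume "j < dim_vec z'"
  hence j: "j < k'" using assms by simp
  have "spread k' i0 z $ skip i0 j = spread k' i0 z' $ skip i0 j" using assms by simp
  thus "z $ j = z' $ j" using spread_skip[OF j, of i0 z] spread_skip[OF j, of i0 z'] by simp
qed (use assms in simp)


lemma dot_lin_r1:
  fixes u w z :: "'a::field vec"
  assumes "u \<in> carrier_vec n" "w \<in> carrier_vec n" "z \<in> carrier_vec n"
  shows "z \<bullet> (a \<cdot>\<^sub>v u + w) = a * (z \<bullet> u) + z \<bullet> w"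
proof -
  have "z \<bullet> (a \<cdot>\<^sub>v u + w) = z \<bullet> (a \<cdot>\<^sub>v u) + z \<bullet> w"
    by (rule scalar_prod_add_distrib[of _ n]) (use assms in auto)
  thus ?thesis using assms by simp
qed

lemma dot_lin_l1:
  fixes u w z :: "'a::field vec"
  assumes "u \<in> carrier_vec n" "w \<in> carrier_vec n" "z \<in> carrier_vec n"
  shows "(a \<cdot>\<^sub>v u + w) \<bullet> z = a * (u \<bullet> z) + w \<bullet> z"
proof -
  have "(a \<cdot>\<^sub>v u + w) \<bullet> z = (a \<cdot>\<^sub>v u) \<bullet> z + w \<bullet> z"
    by (rule add_scalar_prod_distrib[of _ n]) (use assms in auto)
  thus ?thesis using assms by simp
qed

lemma vadd_cancel:
  fixes a b c :: "'a::field vec"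
  assumes "a \<in> carrier_vec n" "b \<in> carrier_vec n" "c \<in> carrier_vec n" "a + b = a + c"
  shows "b = c"
proof (rule eq_vecI)
  fix i assume "i < dim_vec c"
  hence i: "i < n" using assms by simp
  have "(a + b) $ i = (a + c) $ i" using assms(4) by simp
  moreover have "(a + b) $ i = a $ i + b $ i" "(a + c) $ i = a $ i + c $ i" using i assms(1-3) by auto
  ultimately show "b $ i = c $ i" by simp
qed (use assms in simp)

lemma zero_smult_add: "x \<in> carrier_vec n \<Longrightarrow> w \<in> carrier_vec n \<Longrightarrow> 0 \<cdot>\<^sub>v x + w = (w :: 'a::field vec)"
  by (intro eq_vecI) auto

lemma one_smult: "w \<in> carrier_vec n \<Longrightarrow> 1 \<cdot>\<^sub>v w = (w :: 'a::field vec)"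
  by (intro eq_vecI) auto

lemma mat_zero_vec: "A \<in> carrier_mat n m \<Longrightarrow> A *\<^sub>v 0\<^sub>v m = (0\<^sub>v n :: 'a::field vec)"
  by (intro eq_vecI) auto

context
  fixes n m :: nat and x0 :: "'a::field vec" and Phi Psi B :: "'a mat" and p :: nat
  assumes x0c: "x0 \<in> carrier_vec n" and pn: "p < n" and x0p: "x0 $ p \<noteq> 0" and x0x0: "x0 \<bullet> x0 = 0"
    and Phi: "Phi \<in> carrier_mat n m" and Psi: "Psi \<in> carrier_mat m n" and B: "B \<in> carrier_mat m m"
    and PsiPhi: "\<And>d. d \<in> carrier_vec m \<Longrightarrow> Psi *\<^sub>v (Phi *\<^sub>v d) = d"
    and Psix0: "Psi *\<^sub>v x0 = 0\<^sub>v m"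
    and Phip: "\<And>d. d \<in> carrier_vec m \<Longrightarrow> (Phi *\<^sub>v d) $ p = 0"
    and x0Phi: "\<And>d. d \<in> carrier_vec m \<Longrightarrow> x0 \<bullet> (Phi *\<^sub>v d) = 0"
    and form: "\<And>d d'. d \<in> carrier_vec m \<Longrightarrow> d' \<in> carrier_vec m \<Longrightarrow> (Phi *\<^sub>v d) \<bullet> (Phi *\<^sub>v d') = d \<bullet> (B *\<^sub>v d')"
    and decomp: "\<And>z. z \<in> carrier_vec n \<Longrightarrow> z \<bullet> x0 = 0 \<Longrightarrow> z = (z $ p / x0 $ p) \<cdot>\<^sub>v x0 + Phi *\<^sub>v (Psi *\<^sub>v z)"
begin

definition FF :: "'a vec set \<Rightarrow> 'a vec set" where
  "FF D = {t \<cdot>\<^sub>v x0 + Phi *\<^sub>v d | t d. d \<in> D}"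

definition backC :: "'a vec set \<Rightarrow> 'a vec set" where
  "backC C = {d \<in> carrier_vec m. Phi *\<^sub>v d \<in> C}"

lemma Phic[simp]: "d \<in> carrier_vec m \<Longrightarrow> Phi *\<^sub>v d \<in> carrier_vec n"
  using Phi by simp

lemma Psic[simp]: "z \<in> carrier_vec n \<Longrightarrow> Psi *\<^sub>v z \<in> carrier_vec m"
  using Psi by simp

lemma coord_p: "d \<in> carrier_vec m \<Longrightarrow> (t \<cdot>\<^sub>v x0 + Phi *\<^sub>v d) $ p = t * x0 $ p"
  using Phip[of d] x0c pn Phi by simp

lemma part3:
  assumes Dc: "D \<subseteq> carrier_vec m"
  shows "backC (FF D) = D"
proof
  show "backC (FF D) \<subseteq> D"
  proof
    fix d' assume "d' \<in> backC (FF D)"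
    then obtain t d where d': "d' \<in> carrier_vec m" and d: "d \<in> D" and e: "Phi *\<^sub>v d' = t \<cdot>\<^sub>v x0 + Phi *\<^sub>v d"
      unfolding backC_def FF_def by auto
    have dc: "d \<in> carrier_vec m" using d Dc by auto
    have "(Phi *\<^sub>v d') $ p = t * x0 $ p" unfolding e by (rule coord_p[OF dc])
    hence "t = 0" using Phip[OF d'] x0p by simp
    hence "Phi *\<^sub>v d' = Phi *\<^sub>v d" using e zero_smult_add[OF x0c] dc by simp
    hence "d' = d" using PsiPhi[OF d'] PsiPhi[OF dc] by metis
    thus "d' \<in> D" using d by simp
  qed
  show "D \<subseteq> backC (FF D)"
  proof
    fix d assume d: "d \<in> D"
    have dc: "d \<in> carrier_vec m" using d Dc by auto
    have "Phi *\<^sub>v d = 0 \<cdot>\<^sub>v x0 + Phi *\<^sub>v d" using zero_smult_add[OF x0c] dc by simp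
    thus "d \<in> backC (FF D)" unfolding backC_def FF_def using d dc by blast
  qed
qed

lemma part1:
  assumes D: "is_code m k' D" and l: "lcd_wrt m B D"
  shows "FF D \<in> Sx n (Suc k') x0"
proof -
  obtain g where g: "is_lcode m k' g D" using D is_code_iff by blast
  have gi: "\<And>i. i < k' \<Longrightarrow> g i \<in> carrier_vec m" and injg: "inj_on (lc m k' g) (carrier_vec k')"
    and Dg: "D = lc m k' g ` carrier_vec k'" using g unfolding is_lcode_def by auto
  have Dc: "D \<subseteq> carrier_vec m" using code_carrier[OF D] .
  define g' where "g' = (\<lambda>i. if i = 0 then x0 else Phi *\<^sub>v g (i - 1))"
  define tl' where "tl' = (\<lambda>y::'a vec. vec k' (\<lambda>i. y $ Suc i))"
  have lcg': "lc n (Suc k') g' y = y $ 0 \<cdot>\<^sub>v x0 + Phi *\<^sub>v lc m k' g (tl' y)" for y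
    unfolding g'_def tl'_def by (rule lc_shift[OF Phi gi x0c])
  have "is_lcode n (Suc k') g' (FF D)" unfolding is_lcode_def
  proof (intro conjI allI impI)
    fix i assume "i < Suc k'" thus "g' i \<in> carrier_vec n" unfolding g'_def using gi x0c by auto
  next
    show "inj_on (lc n (Suc k') g') (carrier_vec (Suc k'))"
    proof (rule inj_onI)
      fix y y' :: "'a vec" assume y: "y \<in> carrier_vec (Suc k')" and y': "y' \<in> carrier_vec (Suc k')"
        and e: "lc n (Suc k') g' y = lc n (Suc k') g' y'"
      let ?a = "lc m k' g (tl' y)" and ?a' = "lc m k' g (tl' y')"
      have e2: "y $ 0 \<cdot>\<^sub>v x0 + Phi *\<^sub>v ?a = y' $ 0 \<cdot>\<^sub>v x0 + Phi *\<^sub>v ?a'" using e unfolding lcg' .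
      have "(y $ 0 \<cdot>\<^sub>v x0 + Phi *\<^sub>v ?a) $ p = (y' $ 0 \<cdot>\<^sub>v x0 + Phi *\<^sub>v ?a') $ p" using e2 by simp
      hence "y $ 0 * x0 $ p = y' $ 0 * x0 $ p" using coord_p by simp
      hence y0: "y $ 0 = y' $ 0" using x0p by simp
      have "Phi *\<^sub>v ?a = Phi *\<^sub>v ?a'"
        by (rule vadd_cancel[of "y $ 0 \<cdot>\<^sub>v x0" n]) (use e2 y0 x0c in auto)
      hence "?a = ?a'" using PsiPhi[of ?a] PsiPhi[of ?a'] by (metis lc_carrier)
      hence "tl' y = tl' y'" using injg unfolding inj_on_def tl'_def by auto
      hence t: "y $ Suc i = y' $ Suc i" if "i < k'" for i
        using that unfolding tl'_def by (metis index_vec)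
      show "y = y'"
      proof (rule eq_vecI)
        fix i assume "i < dim_vec y'"
        hence i: "i < Suc k'" using y' by simp
        show "y $ i = y' $ i"
        proof (cases i)
          case 0 thus ?thesis using y0 by simp
        next
          case (Suc j) thus ?thesis using t[of j] i by simp
        qed
      qed (use y y' in simp)
    qed
  next
    show "FF D = lc n (Suc k') g' ` carrier_vec (Suc k')"
    proof
      show "FF D \<subseteq> lc n (Suc k') g' ` carrier_vec (Suc k')"
      proof
        fix v assume "v \<in> FF D"
        then obtain t d where v: "v = t \<cdot>\<^sub>v x0 + Phi *\<^sub>v d" and d: "d \<in> D" unfolding FF_def by auto
        obtain z where z: "z \<in> carrier_vec k'" "d = lc m k' g z" using d Dg by auto
        define y where "y = vec (Suc k') (\<lambda>i. if i = 0 then t else z $ (i - 1))"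
        have "tl' y = z" unfolding tl'_def y_def using z by (intro eq_vecI) auto
        hence "lc n (Suc k') g' y = v" unfolding lcg' v z(2) y_def by simp
        thus "v \<in> lc n (Suc k') g' ` carrier_vec (Suc k')" unfolding y_def by force
      qed
      show "lc n (Suc k') g' ` carrier_vec (Suc k') \<subseteq> FF D"
      proof
        fix v assume "v \<in> lc n (Suc k') g' ` carrier_vec (Suc k')"
        then obtain y where "v = lc n (Suc k') g' y" by auto
        hence "v = y $ 0 \<cdot>\<^sub>v x0 + Phi *\<^sub>v lc m k' g (tl' y)" unfolding lcg' .
        moreover have "lc m k' g (tl' y) \<in> D" unfolding Dg tl'_def by auto
        ultimately show "v \<in> FF D" unfolding FF_def by blast
      qed
    qed
  qed
  hence code: "is_code n (Suc k') (FF D)" using is_code_iff by blast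
  have "hullx n (FF D) = line x0"
  proof
    show "line x0 \<subseteq> hullx n (FF D)"
    proof
      fix v assume "v \<in> line x0"
      then obtain t where v: "v = t \<cdot>\<^sub>v x0" unfolding line_def by auto
      have "v = t \<cdot>\<^sub>v x0 + Phi *\<^sub>v 0\<^sub>v m" unfolding v using mat_zero_vec[OF Phi] x0c by simp
      moreover have "0\<^sub>v m \<in> D" using code_subsp[OF D] unfolding subsp_def by auto
      ultimately have vin: "v \<in> FF D" unfolding FF_def by blast
      have "v \<bullet> c' = 0" if "c' \<in> FF D" for c'
      proof -
        obtain s d where c': "c' = s \<cdot>\<^sub>v x0 + Phi *\<^sub>v d" "d \<in> D" using \<open>c' \<in> FF D\<close> unfolding FF_def by auto
        have dc: "d \<in> carrier_vec m" using c' Dc by auto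
        have "v \<bullet> c' = s * (v \<bullet> x0) + v \<bullet> (Phi *\<^sub>v d)" unfolding c'(1)
          by (rule dot_lin_r1) (use x0c dc v in auto)
        also have "\<dots> = 0" unfolding v using x0c dc x0x0 x0Phi[OF dc] by simp
        finally show ?thesis .
      qed
      thus "v \<in> hullx n (FF D)" unfolding hullx_def using vin by blast
    qed
    show "hullx n (FF D) \<subseteq> line x0"
    proof
      fix v assume vh: "v \<in> hullx n (FF D)"
      then obtain t d where v: "v = t \<cdot>\<^sub>v x0 + Phi *\<^sub>v d" and d: "d \<in> D" unfolding hullx_def FF_def by auto
      have dc: "d \<in> carrier_vec m" using d Dc by auto
      have "d' \<bullet> (B *\<^sub>v d) = 0" if d': "d' \<in> D" for d'
      proof -
        have d'c: "d' \<in> carrier_vec m" using d' Dc by auto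
        have "Phi *\<^sub>v d' = 0 \<cdot>\<^sub>v x0 + Phi *\<^sub>v d'" using zero_smult_add[OF x0c] d'c by simp
        hence "Phi *\<^sub>v d' \<in> FF D" unfolding FF_def using d' by blast
        hence "v \<bullet> (Phi *\<^sub>v d') = 0" using vh unfolding hullx_def by blast
        moreover have "v \<bullet> (Phi *\<^sub>v d') = t * (x0 \<bullet> (Phi *\<^sub>v d')) + (Phi *\<^sub>v d) \<bullet> (Phi *\<^sub>v d')"
          unfolding v by (rule dot_lin_l1) (use x0c dc d'c in auto)
        ultimately have "(Phi *\<^sub>v d) \<bullet> (Phi *\<^sub>v d') = 0" using x0Phi[OF d'c] by simp
        hence "(Phi *\<^sub>v d') \<bullet> (Phi *\<^sub>v d) = 0" using comm_scalar_prod[of "Phi *\<^sub>v d" n "Phi *\<^sub>v d'"] dc d'c by simp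
        thus ?thesis using form[OF d'c dc] by simp
      qed
      hence "d = 0\<^sub>v m" using l d unfolding lcd_wrt_def by blast
      hence "v = t \<cdot>\<^sub>v x0" unfolding v using mat_zero_vec[OF Phi] x0c by simp
      thus "v \<in> line x0" unfolding line_def by blast
    qed
  qed
  thus ?thesis unfolding Sx_def using code by blast
qed

lemma part2:
  assumes C: "C \<in> Sx n (Suc k') x0"
  shows "is_code m k' (backC C) \<and> lcd_wrt m B (backC C) \<and> FF (backC C) = C"
proof -
  have code: "is_code n (Suc k') C" and h: "hullx n C = line x0" using C unfolding Sx_def by auto
  obtain g where g: "is_lcode n (Suc k') g C" using code is_code_iff by blast
  have gi: "\<And>i. i < Suc k' \<Longrightarrow> g i \<in> carrier_vec n" and injg: "inj_on (lc n (Suc k') g) (carrier_vec (Suc k'))"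
    and Cg: "C = lc n (Suc k') g ` carrier_vec (Suc k')" using g unfolding is_lcode_def by auto
  have S: "subsp n C" using code_subsp[OF code] .
  have Cc: "C \<subseteq> carrier_vec n" using S unfolding subsp_def by auto
  have x0h: "x0 \<in> hullx n C" unfolding h line_def
    by (rule range_eqI[of _ _ 1]) (use one_smult[OF x0c] in simp)
  have x0C: "x0 \<in> C" and x0o: "\<forall>c\<in>C. x0 \<bullet> c = 0" using x0h unfolding hullx_def by auto
  have cdec: "c = (c $ p / x0 $ p) \<cdot>\<^sub>v x0 + Phi *\<^sub>v (Psi *\<^sub>v c)" if c: "c \<in> C" for c
  proof -
    have cc: "c \<in> carrier_vec n" using c Cc by auto
    have "c \<bullet> x0 = 0" using x0o c comm_scalar_prod[OF cc x0c] by simp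
    thus ?thesis using decomp[OF cc] by simp
  qed
  have PP: "Phi *\<^sub>v (Psi *\<^sub>v c) \<in> C" if c: "c \<in> C" for c
  proof -
    let ?s = "c $ p / x0 $ p"
    have cc: "c \<in> carrier_vec n" using c Cc by auto
    have w: "Phi *\<^sub>v (Psi *\<^sub>v c) \<in> carrier_vec n" using cc by simp
    have "Phi *\<^sub>v (Psi *\<^sub>v c) = 1 \<cdot>\<^sub>v c + (- ?s) \<cdot>\<^sub>v x0"
    proof (rule eq_vecI)
      fix i assume "i < dim_vec (1 \<cdot>\<^sub>v c + (- ?s) \<cdot>\<^sub>v x0)"
      hence i: "i < n" using x0c by simp
      have "c $ i = (?s \<cdot>\<^sub>v x0 + Phi *\<^sub>v (Psi *\<^sub>v c)) $ i" using cdec[OF c] by simp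
      also have "\<dots> = ?s * x0 $ i + (Phi *\<^sub>v (Psi *\<^sub>v c)) $ i" using i w x0c Phi by simp
      finally show "(Phi *\<^sub>v (Psi *\<^sub>v c)) $ i = (1 \<cdot>\<^sub>v c + (- ?s) \<cdot>\<^sub>v x0) $ i"
        using i cc x0c by simp
    qed (use w x0c Phi in simp)
    thus ?thesis using subsp_lin[OF S c x0C, of 1 "- ?s"] by simp
  qed
  have Psib: "Psi *\<^sub>v c \<in> backC C" if "c \<in> C" for c
    unfolding backC_def using PP[OF that] that Cc by auto
  obtain y0 where y0: "y0 \<in> carrier_vec (Suc k')" "x0 = lc n (Suc k') g y0" using x0C Cg by auto
  have "y0 \<noteq> 0\<^sub>v (Suc k')"
  proof
    assume "y0 = 0\<^sub>v (Suc k')"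
    hence "x0 = 0\<^sub>v n" using y0 lc_zero by simp
    thus False using x0p pn by simp
  qed
  then obtain i0 where i0: "i0 < Suc k'" "y0 $ i0 \<noteq> 0"
    using y0(1) by (metis eq_vecI carrier_vecD index_zero_vec(1,2))
  define g'' where "g'' = (\<lambda>j. Psi *\<^sub>v g (skip i0 j))"
  have gsk: "\<And>j. j < k' \<Longrightarrow> g (skip i0 j) \<in> carrier_vec n" using gi unfolding skip_def by auto
  have lcg'': "lc m k' g'' z = Psi *\<^sub>v lc n (Suc k') g (spread k' i0 z)" for z
    unfolding lc_spread[OF i0(1)] g''_def by (rule mat_lc[OF Psi gsk, symmetric])
  have lin: "lc n (Suc k') g (1 \<cdot>\<^sub>v y + a \<cdot>\<^sub>v y') = 1 \<cdot>\<^sub>v lc n (Suc k') g y + a \<cdot>\<^sub>v lc n (Suc k') g y'"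
    if "y \<in> carrier_vec (Suc k')" "y' \<in> carrier_vec (Suc k')" for y y' a
    using that by (simp add: lc_add lc_smult)
  have Psilin: "Psi *\<^sub>v (1 \<cdot>\<^sub>v u + a \<cdot>\<^sub>v w) = 1 \<cdot>\<^sub>v (Psi *\<^sub>v u) + a \<cdot>\<^sub>v (Psi *\<^sub>v w)"
    if "u \<in> carrier_vec n" "w \<in> carrier_vec n" for u w a
    using that Psi by (simp add: mult_add_distrib_mat_vec[OF Psi] mult_mat_vec[OF Psi])
  have bC: "backC C = lc m k' g'' ` carrier_vec k'"
  proof
    show "lc m k' g'' ` carrier_vec k' \<subseteq> backC C"
    proof
      fix d assume "d \<in> lc m k' g'' ` carrier_vec k'"
      then obtain z where "d = lc m k' g'' z" by auto
      hence d: "d = Psi *\<^sub>v lc n (Suc k') g (spread k' i0 z)" unfolding lcg'' .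
      have "lc n (Suc k') g (spread k' i0 z) \<in> C" unfolding Cg by simp
      thus "d \<in> backC C" unfolding d by (rule Psib)
    qed
    show "backC C \<subseteq> lc m k' g'' ` carrier_vec k'"
    proof
      fix d assume "d \<in> backC C"
      hence dc: "d \<in> carrier_vec m" and dC: "Phi *\<^sub>v d \<in> C" unfolding backC_def by auto
      obtain y where y: "y \<in> carrier_vec (Suc k')" "Phi *\<^sub>v d = lc n (Suc k') g y" using dC Cg by auto
      define s where "s = y $ i0 / y0 $ i0"
      define y' where "y' = 1 \<cdot>\<^sub>v y + (- s) \<cdot>\<^sub>v y0"
      have y'c: "y' \<in> carrier_vec (Suc k')" unfolding y'_def using y y0 by simp
      have y'0: "y' $ i0 = 0" unfolding y'_def s_def using y y0 i0 by simp
      have "Psi *\<^sub>v lc n (Suc k') g y' = 1 \<cdot>\<^sub>v (Psi *\<^sub>v (Phi *\<^sub>v d)) + (- s) \<cdot>\<^sub>v (Psi *\<^sub>v x0)"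
        unfolding y'_def lin[OF y(1) y0(1)] y(2)[symmetric] y0(2)[symmetric]
        by (rule Psilin) (use dc x0c in auto)
      also have "\<dots> = d" unfolding PsiPhi[OF dc] Psix0 using dc by (intro eq_vecI) auto
      finally have e: "Psi *\<^sub>v lc n (Suc k') g y' = d" .
      define z where "z = vec k' (\<lambda>j. y' $ skip i0 j)"
      have "spread k' i0 z = y'" unfolding z_def by (rule unspread[OF i0(1) y'c y'0])
      hence "lc m k' g'' z = d" unfolding lcg'' using e by simp
      moreover have "z \<in> carrier_vec k'" unfolding z_def by simp
      ultimately show "d \<in> lc m k' g'' ` carrier_vec k'"
        using image_eqI[of d "lc m k' g''" z "carrier_vec k'"] by simp
    qed
  qed
  have injb: "inj_on (lc m k' g'') (carrier_vec k')"
  proof (rule inj_onI)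
    fix z z' :: "'a vec" assume z: "z \<in> carrier_vec k'" and z': "z' \<in> carrier_vec k'"
      and e: "lc m k' g'' z = lc m k' g'' z'"
    let ?c = "lc n (Suc k') g (spread k' i0 z)" and ?c' = "lc n (Suc k') g (spread k' i0 z')"
    have cC: "?c \<in> C" and c'C: "?c' \<in> C" unfolding Cg by auto
    have ePsi: "Psi *\<^sub>v ?c = Psi *\<^sub>v ?c'" using e unfolding lcg'' .
    define s where "s = ?c $ p / x0 $ p"
    define s' where "s' = ?c' $ p / x0 $ p"
    have ec: "?c = s \<cdot>\<^sub>v x0 + Phi *\<^sub>v (Psi *\<^sub>v ?c)" unfolding s_def by (rule cdec[OF cC])
    have ec': "?c' = s' \<cdot>\<^sub>v x0 + Phi *\<^sub>v (Psi *\<^sub>v ?c)" unfolding s'_def ePsi by (rule cdec[OF c'C])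
    define w where "w = Phi *\<^sub>v (Psi *\<^sub>v ?c)"
    have wc: "w \<in> carrier_vec n" unfolding w_def by simp
    have comb: "1 \<cdot>\<^sub>v (a \<cdot>\<^sub>v x0 + w) + (- a) \<cdot>\<^sub>v x0 = w" for a
      using x0c wc by (intro eq_vecI) auto
    have ec1: "?c = s \<cdot>\<^sub>v x0 + w" unfolding w_def by (rule ec)
    have ec1': "?c' = s' \<cdot>\<^sub>v x0 + w" unfolding w_def by (rule ec')
    have L1: "lc n (Suc k') g (1 \<cdot>\<^sub>v spread k' i0 z + (- s) \<cdot>\<^sub>v y0) = w"
      unfolding lin[OF spread_carrier y0(1)] y0(2)[symmetric] ec1 comb ..
    have L2: "lc n (Suc k') g (1 \<cdot>\<^sub>v spread k' i0 z' + (- s') \<cdot>\<^sub>v y0) = w"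
      unfolding lin[OF spread_carrier y0(1)] y0(2)[symmetric] ec1' comb ..
    have m1: "1 \<cdot>\<^sub>v spread k' i0 z + (- s) \<cdot>\<^sub>v y0 \<in> carrier_vec (Suc k')" using y0(1) by simp
    have m2: "1 \<cdot>\<^sub>v spread k' i0 z' + (- s') \<cdot>\<^sub>v y0 \<in> carrier_vec (Suc k')" using y0(1) by simp
    have EE: "1 \<cdot>\<^sub>v spread k' i0 z + (- s) \<cdot>\<^sub>v y0 = 1 \<cdot>\<^sub>v spread k' i0 z' + (- s') \<cdot>\<^sub>v y0"
      using inj_onD[OF injg _ m1 m2] L1 L2 by simp
    have eq: "spread k' i0 z $ i - s * y0 $ i = spread k' i0 z' $ i - s' * y0 $ i" if i: "i < Suc k'" for i
    proof -
      have "(1 \<cdot>\<^sub>v spread k' i0 z + (- s) \<cdot>\<^sub>v y0) $ i = (1 \<cdot>\<^sub>v spread k' i0 z' + (- s') \<cdot>\<^sub>v y0) $ i"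
        using EE by simp
      thus ?thesis using i y0(1) by simp
    qed
    have a: "spread k' i0 z $ i0 = 0" "spread k' i0 z' $ i0 = 0" by (rule spread_i0[OF i0(1)])+
    from eq[OF i0(1)] have "- (s * y0 $ i0) = - (s' * y0 $ i0)" unfolding a by simp
    hence "s * y0 $ i0 = s' * y0 $ i0" by simp
    hence ss: "s = s'" using i0(2) by simp
    have dz: "dim_vec (spread k' i0 z) = Suc k'" "dim_vec (spread k' i0 z') = Suc k'"
      by (simp_all add: spread_def)
    have "spread k' i0 z = spread k' i0 z'"
    proof (rule eq_vecI)
      fix i assume "i < dim_vec (spread k' i0 z')"
      thus "spread k' i0 z $ i = spread k' i0 z' $ i" using eq[of i] ss dz by simp
    qed (simp only: dz)
    thus "z = z'" by (rule spread_inj[OF z z'])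
  qed
  have "is_lcode m k' g'' (backC C)" unfolding is_lcode_def
  proof (intro conjI allI impI)
    fix j assume "j < k'" thus "g'' j \<in> carrier_vec m" unfolding g''_def using gsk by simp
  qed (rule injb, rule bC)
  hence codeb: "is_code m k' (backC C)" using is_code_iff by blast
  have lcdb: "lcd_wrt m B (backC C)" unfolding lcd_wrt_def
  proof (intro ballI impI)
    fix d' assume d': "d' \<in> backC C" and o: "\<forall>d\<in>backC C. d \<bullet> (B *\<^sub>v d') = 0"
    have d'c: "d' \<in> carrier_vec m" and d'C: "Phi *\<^sub>v d' \<in> C" using d' unfolding backC_def by auto
    have "(Phi *\<^sub>v d') \<bullet> c = 0" if c: "c \<in> C" for c
    proof -
      have cc: "c \<in> carrier_vec n" using c Cc by auto
      have "c \<bullet> (Phi *\<^sub>v d') = (c $ p / x0 $ p) * (x0 \<bullet> (Phi *\<^sub>v d')) + (Phi *\<^sub>v (Psi *\<^sub>v c)) \<bullet> (Phi *\<^sub>v d')"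
        by (subst cdec[OF c], rule dot_lin_l1) (use x0c cc d'c in auto)
      also have "\<dots> = (Psi *\<^sub>v c) \<bullet> (B *\<^sub>v d')" using x0Phi[OF d'c] form[OF _ d'c, of "Psi *\<^sub>v c"] cc by simp
      also have "\<dots> = 0" using o Psib[OF c] by blast
      finally show ?thesis using comm_scalar_prod[OF cc, of "Phi *\<^sub>v d'"] d'c by simp
    qed
    hence "Phi *\<^sub>v d' \<in> hullx n C" unfolding hullx_def using d'C by blast
    then obtain t where t: "Phi *\<^sub>v d' = t \<cdot>\<^sub>v x0" unfolding h line_def by auto
    have "(Phi *\<^sub>v d') $ p = t * x0 $ p" unfolding t using x0c pn by simp
    hence "t * x0 $ p = 0" using Phip[OF d'c] by simp
    hence "t = 0" using x0p by simp
    hence "Phi *\<^sub>v d' = 0\<^sub>v n" using t x0c by (intro eq_vecI) auto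
    hence "Psi *\<^sub>v (Phi *\<^sub>v d') = 0\<^sub>v m" using mat_zero_vec[OF Psi] by simp
    thus "d' = 0\<^sub>v m" using PsiPhi[OF d'c] by simp
  qed
  have FFb: "FF (backC C) = C"
  proof
    show "FF (backC C) \<subseteq> C"
    proof
      fix v assume "v \<in> FF (backC C)"
      then obtain t d where v: "v = t \<cdot>\<^sub>v x0 + Phi *\<^sub>v d" and d: "d \<in> backC C" unfolding FF_def by auto
      have "Phi *\<^sub>v d \<in> C" and dc: "d \<in> carrier_vec m" using d unfolding backC_def by auto
      hence "t \<cdot>\<^sub>v x0 + 1 \<cdot>\<^sub>v (Phi *\<^sub>v d) \<in> C" using subsp_lin[OF S x0C] by blast
      thus "v \<in> C" unfolding v using one_smult[of "Phi *\<^sub>v d" n] dc by simp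
    qed
    show "C \<subseteq> FF (backC C)"
    proof
      fix c assume c: "c \<in> C"
      show "c \<in> FF (backC C)" unfolding FF_def using cdec[OF c] Psib[OF c] by blast
    qed
  qed
  show ?thesis using codeb lcdb FFb by blast
qed

lemma card_Sx:
  "card (Sx n (Suc k') x0) = card {D. is_code m k' D \<and> lcd_wrt m B D}"
proof -
  let ?L = "{D. is_code m k' D \<and> lcd_wrt m B D}"
  have "FF ` ?L = Sx n (Suc k') x0"
  proof
    show "FF ` ?L \<subseteq> Sx n (Suc k') x0" using part1 by blast
    show "Sx n (Suc k') x0 \<subseteq> FF ` ?L"
    proof
      fix C assume "C \<in> Sx n (Suc k') x0"
      from part2[OF this] have "backC C \<in> ?L" "FF (backC C) = C" by auto
      thus "C \<in> FF ` ?L" by (rule rev_image_eqI[OF _ sym])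
    qed
  qed
  moreover have "inj_on FF ?L"
  proof (rule inj_onI)
    fix D1 D2 assume D1: "D1 \<in> ?L" and D2: "D2 \<in> ?L" and e: "FF D1 = FF D2"
    have "D1 = backC (FF D1)" using part3[OF code_carrier[of m k' D1]] D1 by simp
    also have "\<dots> = backC (FF D2)" unfolding e ..
    also have "\<dots> = D2" using part3[OF code_carrier[of m k' D2]] D2 by simp
    finally show "D1 = D2" .
  qed
  ultimately show ?thesis using card_image by fastforce
qed

end


lemma mat2_vec:
  fixes A :: "'a::field mat"
  assumes A: "A \<in> carrier_mat r c"
    and e: "\<And>i j. i < r \<Longrightarrow> j < c \<Longrightarrow> A $$ (i,j) = (if j = f i then \<alpha> i else 0) + (if j = g i then \<beta> i else 0)"
    and f: "\<And>i. i < r \<Longrightarrow> f i < c \<or> \<alpha> i = 0" and g: "\<And>i. i < r \<Longrightarrow> g i < c \<or> \<beta> i = 0"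
    and d: "d \<in> carrier_vec c"
  shows "A *\<^sub>v d = vec r (\<lambda>i. \<alpha> i * d $ f i + \<beta> i * d $ g i)"
proof (rule eq_vecI)
  fix i assume "i < dim_vec (vec r (\<lambda>i. \<alpha> i * d $ f i + \<beta> i * d $ g i))"
  hence i: "i < r" by simp
  have "(A *\<^sub>v d) $ i = (\<Sum>j\<in>{0..<c}. ((if j = f i then \<alpha> i else 0) + (if j = g i then \<beta> i else 0)) * d $ j)"
    using A d i e by (auto simp: scalar_prod_def intro!: sum.cong)
  also have "\<dots> = (\<Sum>j\<in>{0..<c}. (if j = f i then \<alpha> i * d $ j else 0)) + (\<Sum>j\<in>{0..<c}. (if j = g i then \<beta> i * d $ j else 0))"
    by (subst sum.distrib[symmetric]) (rule sum.cong, auto simp: distrib_right)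
  also have "(\<Sum>j\<in>{0..<c}. (if j = f i then \<alpha> i * d $ j else 0)) = \<alpha> i * d $ f i"
    using f[OF i] by auto
  also have "(\<Sum>j\<in>{0..<c}. (if j = g i then \<beta> i * d $ j else 0)) = \<beta> i * d $ g i"
    using g[OF i] by auto
  finally show "(A *\<^sub>v d) $ i = vec r (\<lambda>i. \<alpha> i * d $ f i + \<beta> i * d $ g i) $ i" using i by simp
qed (use A in simp)


lemma sum_split3:
  fixes f :: "nat \<Rightarrow> 'b::comm_monoid_add"
  assumes "3 \<le> (n::nat)"
  shows "(\<Sum>i\<in>{0..<n}. f i) = f 0 + f 1 + f 2 + (\<Sum>j\<in>{0..<n-3}. f (j + 3))"
proof -
  define k where "k = n - 3"
  have n: "n = Suc (Suc (Suc k))" using assms unfolding k_def by simp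
  have "(\<Sum>i\<in>{0..<n}. f i) = f 0 + (f (Suc 0) + (f (Suc (Suc 0)) + (\<Sum>j\<in>{0..<k}. f (Suc (Suc (Suc j))))))"
    unfolding n by (simp only: sum.atLeast0_lessThan_Suc_shift comp_def)
  moreover have "n - 3 = k" unfolding n by simp
  ultimately show ?thesis by (simp add: numeral_2_eq_2 numeral_3_eq_3 add.assoc)
qed

lemma sum_split2:
  fixes f :: "nat \<Rightarrow> 'b::comm_monoid_add"
  assumes "2 \<le> (n::nat)"
  shows "(\<Sum>i\<in>{0..<n}. f i) = f 0 + f 1 + (\<Sum>j\<in>{0..<n-2}. f (j + 2))"
proof -
  define k where "k = n - 2"
  have n: "n = Suc (Suc k)" using assms unfolding k_def by simp
  have "(\<Sum>i\<in>{0..<n}. f i) = f 0 + (f (Suc 0) + (\<Sum>j\<in>{0..<k}. f (Suc (Suc j))))"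
    unfolding n by (simp only: sum.atLeast0_lessThan_Suc_shift comp_def)
  moreover have "n - 2 = k" unfolding n by simp
  ultimately show ?thesis by (simp add: numeral_2_eq_2 add.assoc)
qed


lemma sq_count:
  "card (UNIV - {0::'a::{finite,field}}) \<le> 2 * card {x::'a. x \<noteq> 0 \<and> issq x}"
proof -
  define Q where "Q = {x::'a. x \<noteq> 0 \<and> issq x}"
  have U: "UNIV - {0::'a} = (\<Union>s\<in>Q. {y. y * y = s})"
    unfolding Q_def issq_def by auto
  have fib: "card {y::'a. y * y = s} \<le> 2" if "s \<in> Q" for s
  proof -
    from that have "issq s" by (simp add: Q_def)
    then obtain y0 where y0: "y0 * y0 = s" unfolding issq_def by auto
    have "{y::'a. y * y = s} \<subseteq> {y0, -y0}"
    proof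
      fix y assume "y \<in> {y::'a. y * y = s}"
      hence "(y - y0) * (y + y0) = 0" using y0 by (simp add: algebra_simps)
      thus "y \<in> {y0, -y0}" by (auto simp: add_eq_0_iff)
    qed
    hence "card {y::'a. y * y = s} \<le> card {y0, -y0}" by (intro card_mono) auto
    also have "\<dots> \<le> 2" by (simp add: card_insert_le_m1)
    finally show ?thesis .
  qed
  have "card (UNIV - {0::'a}) \<le> (\<Sum>s\<in>Q. card {y::'a. y * y = s})"
    unfolding U by (rule card_UN_le) simp
  also have "\<dots> \<le> (\<Sum>s\<in>Q. 2)" by (rule sum_mono) (use fib in auto)
  finally show ?thesis unfolding Q_def by simp
qed

lemma sum_two_squares:
  fixes c :: "'a::{finite,field}"
  shows "\<exists>a b. a * a + b * b = c"
proof (rule ccontr)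
  assume h: "\<not> (\<exists>a b. a * a + b * b = c)"
  define A where "A = range (\<lambda>a::'a. a * a)"
  define B where "B = (\<lambda>x. c - x) ` A"
  have disj: "A \<inter> B = {}" using h unfolding A_def B_def by (auto simp: algebra_simps eq_diff_eq)
  have cB: "card B = card A" unfolding B_def by (rule card_image) (auto simp: inj_on_def)
  have A: "A = insert 0 {x::'a. x \<noteq> 0 \<and> issq x}" unfolding A_def issq_def by auto
  have cA: "card A = card {x::'a. x \<noteq> 0 \<and> issq x} + 1" unfolding A by simp
  have "card (UNIV - {0::'a}) = card (UNIV :: 'a set) - 1" by (simp add: card_Diff_singleton)
  hence "card (UNIV :: 'a set) - 1 \<le> 2 * card {x::'a. x \<noteq> 0 \<and> issq x}" using sq_count[where 'a='a] by simp
  hence "card (UNIV :: 'a set) < card A + card B" using cA cB by linarith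
  also have "\<dots> = card (A \<union> B)" using disj by (simp add: card_Un_disjoint)
  also have "\<dots> \<le> card (UNIV :: 'a set)" by (rule card_mono) auto
  finally show False by simp
qed


lemma caseA:
  fixes s :: "'a::{finite,field}"
  assumes s: "s * s = -1" and n2: "2 \<le> n"
  shows "\<exists>x0::'a vec. x0 \<in> carrier_vec n \<and> x0 \<bullet> x0 = 0 \<and> x0 \<noteq> 0\<^sub>v n \<and>
     card (Sx n (Suc k') x0) = card {D :: 'a vec set. is_code (n - 2) k' D \<and> lcd_wrt (n - 2) (1\<^sub>m (n - 2)) D}"
proof -
  define m where "m = n - 2"
  define x0 :: "'a vec" where "x0 = vec n (\<lambda>i. if i = 0 then 1 else if i = 1 then s else 0)"
  define al :: "nat \<Rightarrow> 'a" where "al = (\<lambda>i. if 2 \<le> i then 1 else 0)"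
  define Phi :: "'a mat" where "Phi = mat n m (\<lambda>(i,j). (if j = i - 2 then al i else 0) + (if j = 0 then 0 else 0))"
  define Psi :: "'a mat" where "Psi = mat m n (\<lambda>(j,i). (if i = j + 2 then 1 else 0) + (if i = 0 then 0 else 0))"
  have x0c: "x0 \<in> carrier_vec n" unfolding x0_def by simp
  have PhiC: "Phi \<in> carrier_mat n m" unfolding Phi_def by simp
  have PsiC: "Psi \<in> carrier_mat m n" unfolding Psi_def by simp
  have PhiV: "Phi *\<^sub>v d = vec n (\<lambda>i. if 2 \<le> i then d $ (i - 2) else 0)" if d: "d \<in> carrier_vec m" for d
  proof -
    have "Phi *\<^sub>v d = vec n (\<lambda>i. al i * d $ (i - 2) + 0 * d $ 0)"
      by (rule mat2_vec[OF PhiC _ _ _ d]) (auto simp: Phi_def al_def m_def)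
    thus ?thesis unfolding al_def by (intro eq_vecI) auto
  qed
  have PsiV: "Psi *\<^sub>v z = vec m (\<lambda>j. z $ (j + 2))" if z: "z \<in> carrier_vec n" for z
  proof -
    have "Psi *\<^sub>v z = vec m (\<lambda>j. 1 * z $ (j + 2) + 0 * z $ 0)"
      by (rule mat2_vec[OF PsiC _ _ _ z]) (use n2 in \<open>auto simp: Psi_def m_def\<close>)
    thus ?thesis by (intro eq_vecI) auto
  qed
  have x0x0: "x0 \<bullet> x0 = 0"
    unfolding scalar_prod_def using n2 s by (simp add: sum_split2[OF n2] x0_def)
  have x00: "x0 \<noteq> 0\<^sub>v n"
  proof
    assume "x0 = 0\<^sub>v n" hence "x0 $ 0 = 0" using n2 by simp
    thus False unfolding x0_def using n2 by simp
  qed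
  have "card (Sx n (Suc k') x0) = card {D :: 'a vec set. is_code m k' D \<and> lcd_wrt m (1\<^sub>m m) D}"
  proof (rule card_Sx[of x0 n 0 Phi m Psi "1\<^sub>m m"])
    show "x0 \<in> carrier_vec n" by (rule x0c)
    show "0 < n" using n2 by simp
    show "x0 $ 0 \<noteq> 0" unfolding x0_def using n2 by simp
    show "x0 \<bullet> x0 = 0" by (rule x0x0)
    show "Phi \<in> carrier_mat n m" by (rule PhiC)
    show "Psi \<in> carrier_mat m n" by (rule PsiC)
    show "1\<^sub>m m \<in> carrier_mat m m" by simp
    show "Psi *\<^sub>v (Phi *\<^sub>v d) = d" if d: "d \<in> carrier_vec m" for d
      using d unfolding PsiV[OF mult_mat_vec_carrier[OF PhiC d]] unfolding PhiV[OF d]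
      by (intro eq_vecI) (auto simp: m_def)
    show "Psi *\<^sub>v x0 = 0\<^sub>v m" unfolding PsiV[OF x0c]
      by (intro eq_vecI) (auto simp: x0_def m_def)
    show "(Phi *\<^sub>v d) $ 0 = 0" if d: "d \<in> carrier_vec m" for d
      unfolding PhiV[OF d] using n2 by simp
    show "x0 \<bullet> (Phi *\<^sub>v d) = 0" if d: "d \<in> carrier_vec m" for d
      unfolding PhiV[OF d] scalar_prod_def by (intro sum.neutral) (auto simp: x0_def)
    show "(Phi *\<^sub>v d) \<bullet> (Phi *\<^sub>v d') = d \<bullet> (1\<^sub>m m *\<^sub>v d')"
      if d: "d \<in> carrier_vec m" and d': "d' \<in> carrier_vec m" for d d'
    proof -
      have "(Phi *\<^sub>v d) \<bullet> (Phi *\<^sub>v d') = (\<Sum>j\<in>{0..<n-2}. d $ j * d' $ j)"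
        unfolding PhiV[OF d] PhiV[OF d'] scalar_prod_def by (simp add: sum_split2[OF n2])
      also have "\<dots> = d \<bullet> (1\<^sub>m m *\<^sub>v d')" using d d' unfolding scalar_prod_def m_def by simp
      finally show ?thesis .
    qed
    show "z = (z $ 0 / x0 $ 0) \<cdot>\<^sub>v x0 + Phi *\<^sub>v (Psi *\<^sub>v z)"
      if z: "z \<in> carrier_vec n" and zx: "z \<bullet> x0 = 0" for z
    proof -
      have "z \<bullet> x0 = z $ 0 + z $ 1 * s" unfolding scalar_prod_def using x0c
        by (simp add: sum_split2[OF n2] x0_def)
      hence z0: "z $ 0 = - (z $ 1 * s)" using zx by (simp add: eq_neg_iff_add_eq_0)
      have "z $ 0 * s = - ((s * s) * z $ 1)" unfolding z0 by (simp add: algebra_simps)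
      hence z1: "z $ 0 * s = z $ 1" using s by simp
      have Pz: "Psi *\<^sub>v z \<in> carrier_vec m" using PsiC z by simp
      show ?thesis unfolding PhiV[OF Pz] unfolding PsiV[OF z]
      proof (rule eq_vecI)
        fix i assume "i < dim_vec ((z $ 0 / x0 $ 0) \<cdot>\<^sub>v x0 + vec n (\<lambda>i. if 2 \<le> i then vec m (\<lambda>j. z $ (j + 2)) $ (i - 2) else 0))"
        hence i: "i < n" using x0c by simp
        consider "i = 0" | "i = 1" | "2 \<le> i" by arith
        thus "z $ i = ((z $ 0 / x0 $ 0) \<cdot>\<^sub>v x0 + vec n (\<lambda>i. if 2 \<le> i then vec m (\<lambda>j. z $ (j + 2)) $ (i - 2) else 0)) $ i"
        proof cases
          case 1 thus ?thesis using i by (simp add: x0_def)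
        next
          case 2 thus ?thesis using i z1 by (simp add: x0_def)
        next
          case 3
          hence "Suc (Suc (i - 2)) = i" by arith
          thus ?thesis using i 3 by (simp add: x0_def m_def)
        qed
      qed (use z x0c in simp)
    qed
  qed
  thus ?thesis unfolding m_def using x0c x0x0 x00 by blast
qed


lemma caseB:
  fixes \<gamma> :: "'a::{finite,field}"
  assumes nsq: "\<not> (\<exists>y::'a. y * y = -1)" and g: "\<gamma> \<noteq> 0" "\<not> (\<exists>y. y * y = \<gamma>)" and n3: "3 \<le> n"
  shows "\<exists>x0::'a vec. x0 \<in> carrier_vec n \<and> x0 \<bullet> x0 = 0 \<and> x0 \<noteq> 0\<^sub>v n \<and>
     card (Sx n (Suc k') x0) = card {D :: 'a vec set. is_code (n - 2) k' D \<and>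
        lcd_wrt (n - 2) (mat (n - 2) (n - 2) (\<lambda>(i,j). if i = j then (if i = n - 2 - 1 then \<gamma> else 1) else 0)) D}"
proof -
  define m where "m = n - 2"
  define e where "e = n - 3"
  have me: "m = Suc e" unfolding m_def e_def using n3 by simp
  have ne: "n = e + 3" unfolding e_def using n3 by simp
  have em: "m - 1 = e" unfolding me by simp
  obtain a b :: 'a where ab: "a * a + b * b = -1" using sum_two_squares by blast
  have "issq ((-1) * \<gamma>)" by (rule nonsq_mult_nonsq) (use nsq g in \<open>auto simp: issq_def\<close>)
  then obtain c :: 'a where cc: "c * c = - \<gamma>" unfolding issq_def by auto
  have c0: "c \<noteq> 0" using cc g by auto
  define Bg :: "'a mat" where "Bg = mat m m (\<lambda>(i,j). if i = j then (if i = m - 1 then \<gamma> else 1) else 0)"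
  define x0 :: "'a vec" where "x0 = vec n (\<lambda>i. if i = 0 then a else if i = 1 then b else if i = 2 then 1 else 0)"
  define fP where "fP = (\<lambda>i::nat. if i < 2 then e else i - 3)"
  define aP where "aP = (\<lambda>i::nat. if i = 0 then c * b else if i = 1 then - (c * a) else if i = 2 then 0 else 1)"
  define Phi :: "'a mat" where "Phi = mat n m (\<lambda>(i,j). (if j = fP i then aP i else 0) + (if j = 0 then 0 else 0))"
  define fS where "fS = (\<lambda>j::nat. if j = e then 0 else j + 3)"
  define aS where "aS = (\<lambda>j::nat. if j = e then - (b / c) else 1)"
  define bS where "bS = (\<lambda>j::nat. if j = e then a / c else 0)"
  define Psi :: "'a mat" where "Psi = mat m n (\<lambda>(j,i). (if i = fS j then aS j else 0) + (if i = 1 then bS j else 0))"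
  have x0c: "x0 \<in> carrier_vec n" unfolding x0_def by simp
  have PhiC: "Phi \<in> carrier_mat n m" unfolding Phi_def by simp
  have PsiC: "Psi \<in> carrier_mat m n" unfolding Psi_def by simp
  have BgC: "Bg \<in> carrier_mat m m" unfolding Bg_def by simp
  have PhiV: "Phi *\<^sub>v d = vec n (\<lambda>i. aP i * d $ fP i)" if d: "d \<in> carrier_vec m" for d
  proof -
    have "Phi *\<^sub>v d = vec n (\<lambda>i. aP i * d $ fP i + 0 * d $ 0)"
      by (rule mat2_vec[OF PhiC _ _ _ d]) (auto simp: Phi_def fP_def me ne)
    thus ?thesis by (intro eq_vecI) auto
  qed
  have PsiV: "Psi *\<^sub>v z = vec m (\<lambda>j. aS j * z $ fS j + bS j * z $ 1)" if z: "z \<in> carrier_vec n" for z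
    by (rule mat2_vec[OF PsiC _ _ _ z]) (auto simp: Psi_def fS_def me ne)
  have BgV: "Bg *\<^sub>v d = vec m (\<lambda>j. (if j = e then \<gamma> else 1) * d $ j + 0 * d $ 0)" if d: "d \<in> carrier_vec m" for d
    by (rule mat2_vec[OF BgC _ _ _ d]) (auto simp: Bg_def me)
  have x0x0: "x0 \<bullet> x0 = 0"
    unfolding scalar_prod_def using n3 ab by (simp add: sum_split3[OF n3] x0_def)
  have x00: "x0 \<noteq> 0\<^sub>v n"
  proof
    assume "x0 = 0\<^sub>v n" hence "x0 $ 2 = 0" using n3 by simp
    thus False unfolding x0_def using n3 by simp
  qed
  have "card (Sx n (Suc k') x0) = card {D :: 'a vec set. is_code m k' D \<and> lcd_wrt m Bg D}"
  proof (rule card_Sx[of x0 n 2 Phi m Psi Bg])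
    show "x0 \<in> carrier_vec n" by (rule x0c)
    show "2 < n" using n3 by simp
    show "x0 $ 2 \<noteq> 0" unfolding x0_def using n3 by simp
    show "x0 \<bullet> x0 = 0" by (rule x0x0)
    show "Phi \<in> carrier_mat n m" by (rule PhiC)
    show "Psi \<in> carrier_mat m n" by (rule PsiC)
    show "Bg \<in> carrier_mat m m" by (rule BgC)
    show "Psi *\<^sub>v (Phi *\<^sub>v d) = d" if d: "d \<in> carrier_vec m" for d
    proof -
      have "Psi *\<^sub>v (Phi *\<^sub>v d) = vec m (\<lambda>j. aS j * (Phi *\<^sub>v d) $ fS j + bS j * (Phi *\<^sub>v d) $ 1)"
        by (rule PsiV[OF mult_mat_vec_carrier[OF PhiC d]])
      also have "\<dots> = d"
      proof (rule eq_vecI)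
        fix j assume "j < dim_vec d"
        hence j: "j < m" using d by simp
        show "vec m (\<lambda>j. aS j * (Phi *\<^sub>v d) $ fS j + bS j * (Phi *\<^sub>v d) $ 1) $ j = d $ j"
        proof (cases "j = e")
          case True
          have "aS j * (Phi *\<^sub>v d) $ fS j + bS j * (Phi *\<^sub>v d) $ 1 = - (b / c) * (c * b * d $ e) + a / c * (- (c * a) * d $ e)"
            unfolding PhiV[OF d] using True ne by (simp add: aS_def bS_def fS_def aP_def fP_def)
          also have "\<dots> = - (a * a + b * b) * d $ e" using c0 by (simp add: field_simps)
          finally show ?thesis using j True ab by simp
        next
          case False
          hence "j < e" using j me by simp
          thus ?thesis unfolding PhiV[OF d] using j ne by (simp add: aS_def bS_def fS_def aP_def fP_def)
        qed
      qed (use d in simp)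
      finally show ?thesis .
    qed
    show "Psi *\<^sub>v x0 = 0\<^sub>v m"
      unfolding PsiV[OF x0c]
      by (intro eq_vecI) (auto simp: aS_def bS_def fS_def x0_def ne me field_simps)
    show "(Phi *\<^sub>v d) $ 2 = 0" if d: "d \<in> carrier_vec m" for d
      unfolding PhiV[OF d] using n3 by (simp add: aP_def)
    show "x0 \<bullet> (Phi *\<^sub>v d) = 0" if d: "d \<in> carrier_vec m" for d
      unfolding PhiV[OF d] scalar_prod_def using n3
      by (simp add: sum_split3[OF n3] x0_def aP_def fP_def algebra_simps)
    show "(Phi *\<^sub>v d) \<bullet> (Phi *\<^sub>v d') = d \<bullet> (Bg *\<^sub>v d')"
      if d: "d \<in> carrier_vec m" and d': "d' \<in> carrier_vec m" for d d'
    proof -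
      have "(Phi *\<^sub>v d) \<bullet> (Phi *\<^sub>v d') = c * c * (a * a + b * b) * (d $ e * d' $ e) + (\<Sum>j\<in>{0..<e}. d $ j * d' $ j)"
        unfolding PhiV[OF d] PhiV[OF d'] scalar_prod_def
        by (simp add: sum_split3[OF n3] aP_def fP_def algebra_simps e_def[symmetric])
      also have "\<dots> = \<gamma> * (d $ e * d' $ e) + (\<Sum>j\<in>{0..<e}. d $ j * d' $ j)" using ab cc by simp
      also have "\<dots> = d \<bullet> (Bg *\<^sub>v d')"
        unfolding BgV[OF d'] scalar_prod_def using d' unfolding me
        by (simp add: algebra_simps)
      finally show ?thesis .
    qed
    show "z = (z $ 2 / x0 $ 2) \<cdot>\<^sub>v x0 + Phi *\<^sub>v (Psi *\<^sub>v z)"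
      if z: "z \<in> carrier_vec n" and zx: "z \<bullet> x0 = 0" for z
    proof -
      have "z \<bullet> x0 = a * z $ 0 + b * z $ 1 + z $ 2" unfolding scalar_prod_def using x0c
        by (simp add: sum_split3[OF n3] x0_def algebra_simps)
      hence z2: "z $ 2 = - (a * z $ 0) - b * z $ 1" using zx by (simp add: algebra_simps eq_neg_iff_add_eq_0)
      have Pz: "Psi *\<^sub>v z \<in> carrier_vec m" using PsiC z by simp
      have x02: "x0 $ 2 = 1" unfolding x0_def using n3 by simp
      show ?thesis unfolding PhiV[OF Pz] unfolding PsiV[OF z]
      proof (rule eq_vecI)
        fix i assume "i < dim_vec ((z $ 2 / x0 $ 2) \<cdot>\<^sub>v x0 + vec n (\<lambda>i. aP i * vec m (\<lambda>j. aS j * z $ fS j + bS j * z $ 1) $ fP i))"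
        hence i: "i < n" using x0c by simp
        consider "i = 0" | "i = 1" | "i = 2" | "3 \<le> i" by arith
        thus "z $ i = ((z $ 2 / x0 $ 2) \<cdot>\<^sub>v x0 + vec n (\<lambda>i. aP i * vec m (\<lambda>j. aS j * z $ fS j + bS j * z $ 1) $ fP i)) $ i"
        proof cases
          case 1
          have "z $ 2 * a + c * b * (- (b / c) * z $ 0 + a / c * z $ 1) = - (a * a + b * b) * z $ 0"
            unfolding z2 using c0 by (simp add: field_simps)
          thus ?thesis using 1 i x02 ab me by (simp add: x0_def aP_def fP_def aS_def bS_def fS_def)
        next
          case 2
          have "z $ 2 * b + - (c * a) * (- (b / c) * z $ 0 + a / c * z $ 1) = - (a * a + b * b) * z $ 1"
            unfolding z2 using c0 by (simp add: field_simps)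
          thus ?thesis using 2 i x02 ab me by (simp add: x0_def aP_def fP_def aS_def bS_def fS_def)
        next
          case 3 thus ?thesis using i x02 by (simp add: x0_def aP_def)
        next
          case 4
          hence "i - 3 < e" "i - 3 + 3 = i" using i ne by arith+
          thus ?thesis using 4 i x02 me by (simp add: x0_def aP_def fP_def aS_def bS_def fS_def)
        qed
      qed (use z x0c in simp)
    qed
  qed
  moreover have "Bg = mat (n - 2) (n - 2) (\<lambda>(i,j). if i = j then (if i = n - 2 - 1 then \<gamma> else 1) else 0)"
    unfolding Bg_def m_def ..
  ultimately show ?thesis unfolding m_def using x0c x0x0 x00 by auto
qed


lemma GI_full:
  fixes C :: "'a::{finite,field} vec set"
  assumes code: "is_code n k C" and odd: "odd (card (UNIV :: 'a set))"
  shows "GI_reducible n C \<longleftrightarrow> LCD n C \<or> (\<exists>x\<in>Xset n. hullx n C = line x)"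
  using GI_iff[OF code] GI_char[OF code odd] by simp

lemma quad_form_eq:
  assumes "\<exists>y::'a::field. y * y = -1"
  shows "form_of_type (quad_char (-1 :: 'a)) m = (1\<^sub>m m :: 'a mat)"
  using assms unfolding quad_char_def form_of_type_def by simp

lemma nonquad_form_eq:
  assumes "\<not> (\<exists>y::'a::field. y * y = -1)"
  shows "form_of_type (quad_char (-1 :: 'a)) m = (mat m m (\<lambda>(i,j). if i = j then
     (if i = m - 1 then (SOME g::'a. g \<noteq> 0 \<and> \<not> (\<exists>y. y * y = g)) else 1) else 0) :: 'a mat)"
proof -
  have qc: "quad_char (-1 :: 'a) = -1" using assms unfolding quad_char_def by auto
  have ne: "(-1::int) \<noteq> 1" by simp
  show ?thesis unfolding qc form_of_type_def Let_def if_not_P[OF ne] ..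
qed

lemma card_S_const:
  fixes x :: "'a::{finite,field} vec"
  assumes odd: "odd (card (UNIV :: 'a set))" and x: "x \<in> Xset n" and n2: "2 \<le> n"
  shows "card (Sx n (Suc k') x) = card {D :: 'a vec set. is_code (n - 2) k' D \<and>
            M_LCD (n - 2) (form_of_type (quad_char (-1 :: 'a)) (n - 2)) D}"
proof -
  have two: "(2::'a) \<noteq> 0" by (rule two_ne_zero_odd[OF odd])
  have xc: "x \<in> carrier_vec n" and xx: "x \<bullet> x = 0" and x0: "x \<noteq> 0\<^sub>v n"
    using x Xset_ne0[OF x] unfolding Xset_def by auto
  let ?F = "form_of_type (quad_char (-1 :: 'a)) (n - 2)"
  have Fc: "?F \<in> carrier_mat (n - 2) (n - 2)" unfolding form_of_type_def by (auto simp: Let_def)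
  have eqL: "{D :: 'a vec set. is_code (n - 2) k' D \<and> M_LCD (n - 2) ?F D}
           = {D. is_code (n - 2) k' D \<and> lcd_wrt (n - 2) ?F D}"
    using M_LCD_iff[OF _ Fc] by blast
  show ?thesis
  proof (cases "\<exists>y::'a. y * y = -1")
    case True
    then obtain s :: 'a where s: "s * s = -1" by blast
    obtain x1 :: "'a vec" where x1: "x1 \<in> carrier_vec n" "x1 \<bullet> x1 = 0" "x1 \<noteq> 0\<^sub>v n"
      and c1: "card (Sx n (Suc k') x1) = card {D :: 'a vec set. is_code (n - 2) k' D \<and> lcd_wrt (n - 2) (1\<^sub>m (n - 2)) D}"
      using caseA[OF s n2, of k'] by blast
    have "card (Sx n (Suc k') x) = card (Sx n (Suc k') x1)"
      by (rule card_S_eq[OF two xc x1(1) xx x1(2) x0 x1(3)])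
    thus ?thesis unfolding eqL unfolding quad_form_eq[OF True] using c1 by simp
  next
    case False
    have n3: "3 \<le> n"
    proof (rule ccontr)
      assume "\<not> 3 \<le> n"
      hence n: "n = 2" using n2 by simp
      have "x \<bullet> x = x $ 0 * x $ 0 + x $ 1 * x $ 1" unfolding scalar_prod_def using xc n
        by (simp add: numeral_2_eq_2)
      hence e: "x $ 0 * x $ 0 + x $ 1 * x $ 1 = 0" using xx by simp
      show False
      proof (cases "x $ 0 = 0")
        case True
        hence "x $ 1 = 0" using e by simp
        hence "x = 0\<^sub>v n" using True xc n by (intro eq_vecI) (auto simp: less_2_cases_iff)
        thus False using x0 by simp
      next
        case f: False
        have "(x $ 1 / x $ 0) * (x $ 1 / x $ 0) = -1" using e f by (simp add: field_simps eq_neg_iff_add_eq_0)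
        thus False using False by blast
      qed
    qed
    define \<gamma> where "\<gamma> = (SOME g::'a. g \<noteq> 0 \<and> \<not> (\<exists>y. y * y = g))"
    have g: "\<gamma> \<noteq> 0" "\<not> (\<exists>y. y * y = \<gamma>)"
      using someI_ex[OF exists_nonsq[OF odd]] unfolding \<gamma>_def by auto
    obtain x1 :: "'a vec" where x1: "x1 \<in> carrier_vec n" "x1 \<bullet> x1 = 0" "x1 \<noteq> 0\<^sub>v n"
      and c1: "card (Sx n (Suc k') x1) = card {D :: 'a vec set. is_code (n - 2) k' D \<and>
        lcd_wrt (n - 2) (mat (n - 2) (n - 2) (\<lambda>(i,j). if i = j then (if i = n - 2 - 1 then \<gamma> else 1) else 0)) D}"
      using caseB[OF False g n3, of k'] by blast
    have "card (Sx n (Suc k') x) = card (Sx n (Suc k') x1)"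
      by (rule card_S_eq[OF two xc x1(1) xx x1(2) x0 x1(3)])
    thus ?thesis unfolding eqL unfolding nonquad_form_eq[OF False] using c1 unfolding \<gamma>_def by simp
  qed
qed


theorem mainTheorem3:
  fixes n k :: nat
  assumes "odd (card (UNIV :: 'a::{finite,field} set))"
    and "1 \<le> k" and "k < n"
  shows "real (card {C :: 'a vec set. is_code n k C \<and> GI_reducible n C}) =
           real (card {C :: 'a vec set. is_code n k C \<and> LCD n C})
         + real (card {x :: 'a vec. x \<in> carrier_vec n \<and> x \<bullet> x = 0 \<and> x \<bullet> all_ones_vec n \<noteq> 0})
             / (real (card (UNIV :: 'a set)) - 1)
           * real (card {C :: 'a vec set. is_code (n - 2) (k - 1) C \<and>
                M_LCD (n - 2) (form_of_type (quad_char (-1 :: 'a)) (n - 2)) C})"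
proof -
  note odd = assms(1)
  define k' where "k' = k - 1"
  have k: "k = Suc k'" unfolding k'_def using assms(2) by simp
  have n2: "2 \<le> n" using assms(2,3) by simp
  define q where "q = card (UNIV :: 'a set)"
  have q3: "3 \<le> q" unfolding q_def by (rule card_field_ge3[OF odd])
  define L where "L = card {C :: 'a vec set. is_code (n - 2) (k - 1) C \<and>
                M_LCD (n - 2) (form_of_type (quad_char (-1 :: 'a)) (n - 2)) C}"
  let ?GI = "{C :: 'a vec set. is_code n k C \<and> GI_reducible n C}"
  let ?LC = "{C :: 'a vec set. is_code n k C \<and> LCD n C}"
  let ?R = "{C :: 'a vec set. is_code n k C \<and> (\<exists>x\<in>Xset n. hullx n C = line x)}"
  have GI: "?GI = ?LC \<union> ?R"
  proof (rule Set.set_eqI)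
    fix C :: "'a vec set"
    show "C \<in> ?GI \<longleftrightarrow> C \<in> ?LC \<union> ?R"
    proof (cases "is_code n k C")
      case True thus ?thesis using GI_full[OF True odd] by simp
    next
      case False thus ?thesis by simp
    qed
  qed
  have disj: "?LC \<inter> ?R = {}"
  proof (rule ccontr)
    assume "?LC \<inter> ?R \<noteq> {}"
    then obtain C where CC: "C \<in> ?LC \<inter> ?R" by blast
    hence C: "is_code n k C" "LCD n C" and "\<exists>x\<in>Xset n. hullx n C = line x" by auto
    then obtain x where x: "x \<in> Xset n" "hullx n C = line x" by blast
    have "hullx n C = {0\<^sub>v n}" using C(2) unfolding LCD_def code_hull_eq[OF code_subsp[OF C(1)]] .
    moreover have "x \<in> line x" unfolding line_def
      by (rule range_eqI[of _ _ 1]) (use x(1) one_smult in \<open>auto simp: Xset_def\<close>)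
    ultimately have "x = 0\<^sub>v n" using x(2) by simp
    thus False using Xset_ne0[OF x(1)] by simp
  qed
  have finLC: "finite ?LC" by (rule finite_codes)
  have finR: "finite ?R" by (rule finite_codes)
  have cGI: "card ?GI = card ?LC + card ?R" unfolding GI using card_Un_disjoint[OF finLC finR disj] .
  have all: "card {C :: 'a vec set. is_code n k C \<and> hullx n C = line x} = L" if x: "x \<in> Xset n" for x
    using card_S_const[OF odd x n2, of k'] unfolding Sx_def L_def k by simp
  have dc: "(q - 1) * card ?R = card (Xset n :: 'a vec set) * L"
    unfolding q_def by (rule double_count[OF all])
  have K: "{x :: 'a vec. x \<in> carrier_vec n \<and> x \<bullet> x = 0 \<and> x \<bullet> all_ones_vec n \<noteq> 0} = Xset n"
    unfolding Xset_def by simp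
  have "real (q - 1) * real (card ?R) = real (card (Xset n :: 'a vec set)) * real L"
    unfolding of_nat_mult[symmetric] dc ..
  moreover have "real (q - 1) = real q - 1" using q3 by simp
  ultimately have "real (card ?R) = real (card (Xset n :: 'a vec set)) / (real q - 1) * real L"
    using q3 by (simp add: field_simps)
  thus ?thesis unfolding K cGI q_def[symmetric] L_def[symmetric] by simp
qed


end
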